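(* Let $H$ be a torsion-free group, $I\subseteq H$ with $1_H\notin I$ and $I=I^{-1}$, and let $x\in N(H,I)$. Then $x$ is conjugate to $xz$ in $G(H,I)$ if and only if there exists $g\in H$ such that $|g^{-1}\cdot\mathrm{supp}(x)\cap I|$ is odd.
   Context: For a group $H$ and a subset $I\subseteq H$ with $1_H\notin I$ and $I=I^{-1}$, $G(H,I)$ is the group generated by $H$ together with elements $a,z$ subject to the relations of $H$, $z^2=a^2=1$, $z$ central, and $[a,hah^{-1}]=z^{\chi_I(h)}$ for all $h\in H$ (where $\chi_I$ is the indicator function of $I$). It is a central extension $1\to\{1,z\}\to G(H,I)\xrightarrow{\tau} C_2\wr H\to 1$, where $\tau$ kills $z$ and sends $a$ to the lamp generator at $1_H$; let $\pi:G(H,I)\to H$ be the projection killing $a$ and $z$. $N(H,I)=\pi^{-1}(1_H)=\tau^{-1}(\bigoplus_H C_2)$. For $x\in N(H,I)$, $\mathrm{supp}(x)\subseteq H$ is the (finite) support of $\tau(x)\in\bigoplus_H C_2$, viewed as a finitely supported function $H\to C_2$. For $c,x\in N(H,I)$ one has $[c,x]=z^{\varepsilon}$ with $\varepsilon\equiv\sum_{g\in\mathrm{supp}(c)}\sum_{h\in\mathrm{supp}(x)}\chi_I(g^{-1}h)\pmod 2$. *)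

theory Defs
  imports "HOL-Algebra.Group"
begin

text \<open>Generators of G(H,I): the elements of H, together with a and z.
  A letter is a generator together with a flag saying whether it is inverted.\<close>

datatype 'h gen = GH 'h | GA | GZ

type_synonym 'h word = "('h gen \<times> bool) list"

definition torsion_free :: "('h, 'm) monoid_scheme \<Rightarrow> bool" where
  "torsion_free H \<longleftrightarrow>
     (\<forall>h \<in> carrier H. \<forall>n::nat. n > 0 \<longrightarrow> h [^]\<^bsub>H\<^esub> n = \<one>\<^bsub>H\<^esub> \<longrightarrow> h = \<one>\<^bsub>H\<^esub>)"

definition gens :: "('h, 'm) monoid_scheme \<Rightarrow> 'h gen set" where
  "gens H = {GA, GZ} \<union> GH ` carrier H"

definition valid_word :: "('h, 'm) monoid_scheme \<Rightarrow> 'h word \<Rightarrow> bool" where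
  "valid_word H w \<longleftrightarrow> (\<forall>l \<in> set w. fst l \<in> gens H)"

text \<open>The commutator [a, h a h^-1] = a^-1 (h a h^-1)^-1 a (h a h^-1) as a word.\<close>
definition comm_word :: "'h \<Rightarrow> 'h word" where
  "comm_word h = [(GA,True),(GH h,False),(GA,True),(GH h,True),
                  (GA,False),(GH h,False),(GA,False),(GH h,True)]"

definition relators :: "('h, 'm) monoid_scheme \<Rightarrow> 'h set \<Rightarrow> 'h word set" where
  "relators H I =
     {[(GH g,False),(GH h,False),(GH (g \<otimes>\<^bsub>H\<^esub> h),True)] | g h. g \<in> carrier H \<and> h \<in> carrier H}
   \<union> {[(GZ,False),(GZ,False)], [(GA,False),(GA,False)]}
   \<union> {[(GZ,False),(x,False),(GZ,True),(x,True)] | x. x \<in> gens H}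
   \<union> {comm_word h @ (if h \<in> I then [(GZ,True)] else []) | h. h \<in> carrier H}"

inductive pres_eq :: "('h, 'm) monoid_scheme \<Rightarrow> 'h set \<Rightarrow> 'h word \<Rightarrow> 'h word \<Rightarrow> bool"
  for H I where
  refl: "valid_word H w \<Longrightarrow> pres_eq H I w w"
| sym: "pres_eq H I u v \<Longrightarrow> pres_eq H I v u"
| trans: "pres_eq H I u v \<Longrightarrow> pres_eq H I v w \<Longrightarrow> pres_eq H I u w"
| cancel: "valid_word H u \<Longrightarrow> valid_word H v \<Longrightarrow> x \<in> gens H \<Longrightarrow>
           pres_eq H I (u @ [(x,b),(x,\<not>b)] @ v) (u @ v)"
| relator: "valid_word H u \<Longrightarrow> valid_word H v \<Longrightarrow> r \<in> relators H I \<Longrightarrow>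
           pres_eq H I (u @ r @ v) (u @ v)"

definition cls :: "('h, 'm) monoid_scheme \<Rightarrow> 'h set \<Rightarrow> 'h word \<Rightarrow> 'h word set" where
  "cls H I w = {w'. pres_eq H I w w'}"

definition rep :: "'h word set \<Rightarrow> 'h word" where
  "rep A = (SOME w. w \<in> A)"

definition Gpres :: "('h, 'm) monoid_scheme \<Rightarrow> 'h set \<Rightarrow> 'h word set monoid" where
  "Gpres H I = \<lparr> carrier = {cls H I w | w. valid_word H w},
                 mult = (\<lambda>A B. cls H I (rep A @ rep B)),
                 one = cls H I [] \<rparr>"

definition zG :: "('h, 'm) monoid_scheme \<Rightarrow> 'h set \<Rightarrow> 'h word set" where
  "zG H I = cls H I [(GZ,False)]"

fun letter_val :: "('h, 'm) monoid_scheme \<Rightarrow> 'h gen \<times> bool \<Rightarrow> 'h" where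
  "letter_val H (GH h, False) = h"
| "letter_val H (GH h, True) = inv\<^bsub>H\<^esub> h"
| "letter_val H (GA, _) = \<one>\<^bsub>H\<^esub>"
| "letter_val H (GZ, _) = \<one>\<^bsub>H\<^esub>"

definition word_pi :: "('h, 'm) monoid_scheme \<Rightarrow> 'h word \<Rightarrow> 'h" where
  "word_pi H w = foldr (\<lambda>l acc. letter_val H l \<otimes>\<^bsub>H\<^esub> acc) w \<one>\<^bsub>H\<^esub>"

definition piG :: "('h, 'm) monoid_scheme \<Rightarrow> 'h word set \<Rightarrow> 'h" where
  "piG H x = word_pi H (rep x)"

definition Npres :: "('h, 'm) monoid_scheme \<Rightarrow> 'h set \<Rightarrow> 'h word set set" where
  "Npres H I = {x \<in> carrier (Gpres H I). piG H x = \<one>\<^bsub>H\<^esub>}"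

text \<open>Support of tau(x): in C_2 wr H (with (f,h)(f',h') = (f + h.f', hh')), an
  occurrence of a^(+-1) whose preceding prefix projects to p contributes the
  lamp at p.\<close>
definition word_supp :: "('h, 'm) monoid_scheme \<Rightarrow> 'h word \<Rightarrow> 'h set" where
  "word_supp H w = {p \<in> carrier H.
     odd (card {i. i < length w \<and> fst (w ! i) = GA \<and> word_pi H (take i w) = p})}"

definition supp :: "('h, 'm) monoid_scheme \<Rightarrow> 'h word set \<Rightarrow> 'h set" where
  "supp H x = word_supp H (rep x)"

end

theory Submission
  imports Defs
begin

lemma valid_append[simp]: "valid_word H (u @ v) \<longleftrightarrow> valid_word H u \<and> valid_word H v"
  by (auto simp: valid_word_def)
lemma valid_Cons[simp]: "valid_word H (l # v) \<longleftrightarrow> fst l \<in> gens H \<and> valid_word H v"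
  by (auto simp: valid_word_def)
lemma valid_Nil[simp]: "valid_word H []"
  by (auto simp: valid_word_def)
lemma gens_simps[simp]: "GA \<in> gens H" "GZ \<in> gens H" "GH h \<in> gens H \<longleftrightarrow> h \<in> carrier H"
  by (auto simp: gens_def)

context
  fixes H :: "('h,'m) monoid_scheme" and I :: "'h set"
  assumes grpH: "group H"
begin

lemma relators_valid: "r \<in> relators H I \<Longrightarrow> valid_word H r"
  using group.is_monoid[OF grpH]
  by (auto simp: relators_def comm_word_def monoid.m_closed)

lemma pres_eq_valid: "pres_eq H I u v \<Longrightarrow> valid_word H u \<and> valid_word H v"
  by (induction rule: pres_eq.induct) (auto dest: relators_valid)

lemma pres_eq_app_left: "pres_eq H I u v \<Longrightarrow> valid_word H w \<Longrightarrow> pres_eq H I (w @ u) (w @ v)"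
proof (induction rule: pres_eq.induct)
  case (refl w') then show ?case by (auto intro: pres_eq.refl)
next
  case (sym u v) then show ?case by (auto intro: pres_eq.sym)
next
  case (trans u v w') then show ?case by (auto intro: pres_eq.trans)
next
  case (cancel u v x b) then show ?case
    using pres_eq.cancel[where H=H and I=I and u="w @ u" and v=v and x=x and b=b] by simp
next
  case (relator u v r) then show ?case
    using pres_eq.relator[where H=H and I=I and u="w @ u" and v=v and r=r] by simp
qed

lemma pres_eq_app_right: "pres_eq H I u v \<Longrightarrow> valid_word H w \<Longrightarrow> pres_eq H I (u @ w) (v @ w)"
proof (induction rule: pres_eq.induct)
  case (refl w') then show ?case by (auto intro: pres_eq.refl)
next
  case (sym u v) then show ?case by (auto intro: pres_eq.sym)
next
  case (trans u v w') then show ?case by (auto intro: pres_eq.trans)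
next
  case (cancel u v x b) then show ?case
    using pres_eq.cancel[where H=H and I=I and u=u and v="v @ w" and x=x and b=b] by simp
next
  case (relator u v r) then show ?case
    using pres_eq.relator[where H=H and I=I and u=u and v="v @ w" and r=r] by simp
qed

lemma pres_eq_app: "pres_eq H I u u' \<Longrightarrow> pres_eq H I v v' \<Longrightarrow> pres_eq H I (u @ v) (u' @ v')"
  by (meson pres_eq.trans pres_eq_app_left pres_eq_app_right pres_eq_valid)

lemma cls_self: "valid_word H w \<Longrightarrow> w \<in> cls H I w"
  by (simp add: cls_def pres_eq.refl)

lemma cls_eq_iff: "valid_word H w \<Longrightarrow> cls H I w = cls H I w' \<longleftrightarrow> pres_eq H I w w'"
proof
  assume v: "valid_word H w" and e: "cls H I w = cls H I w'"
  have "w \<in> cls H I w" using v by (rule cls_self)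
  then have "w \<in> cls H I w'" using e by simp
  then have "pres_eq H I w' w" by (simp add: cls_def)
  then show "pres_eq H I w w'" by (rule pres_eq.sym)
next
  assume "pres_eq H I w w'"
  then show "cls H I w = cls H I w'"
    unfolding cls_def by (auto intro: pres_eq.trans pres_eq.sym)
qed

lemma cls_eqI: "pres_eq H I w w' \<Longrightarrow> cls H I w = cls H I w'"
  using cls_eq_iff pres_eq_valid by blast

lemma rep_cls: "valid_word H w \<Longrightarrow> pres_eq H I w (rep (cls H I w))"
proof -
  assume "valid_word H w"
  then have "w \<in> cls H I w" by (rule cls_self)
  then have "rep (cls H I w) \<in> cls H I w" unfolding rep_def by (rule someI)
  then show ?thesis by (simp add: cls_def)
qed

lemma cls_rep: "valid_word H w \<Longrightarrow> cls H I (rep (cls H I w)) = cls H I w"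
  using rep_cls cls_eqI by (metis pres_eq.sym)

lemma valid_rep: "valid_word H w \<Longrightarrow> valid_word H (rep (cls H I w))"
  using rep_cls pres_eq_valid by blast

lemma Gmult: "valid_word H a \<Longrightarrow> valid_word H b \<Longrightarrow>
   cls H I a \<otimes>\<^bsub>Gpres H I\<^esub> cls H I b = cls H I (a @ b)"
  unfolding Gpres_def by (auto intro!: cls_eqI pres_eq_app rep_cls[THEN pres_eq.sym])

lemma Gone: "\<one>\<^bsub>Gpres H I\<^esub> = cls H I []" by (simp add: Gpres_def)

lemma Gcarrier: "carrier (Gpres H I) = {cls H I w | w. valid_word H w}" by (simp add: Gpres_def)

definition invw :: "'h word \<Rightarrow> 'h word" where
  "invw w = rev (map (\<lambda>(x,b). (x, \<not> b)) w)"

lemma invw_valid: "valid_word H w \<Longrightarrow> valid_word H (invw w)"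
  by (auto simp: invw_def valid_word_def)

lemma invw_cancel: "valid_word H w \<Longrightarrow> pres_eq H I (invw w @ w) []"
proof (induction w rule: rev_induct)
  case Nil then show ?case by (simp add: invw_def pres_eq.refl)
next
  case (snoc l w)
  obtain x b where l: "l = (x,b)" by force
  have v: "valid_word H w" "x \<in> gens H" using snoc.prems l by auto
  have "invw (w @ [l]) @ w @ [l] = [(x, \<not>b)] @ (invw w @ w) @ [(x,b)]"
    by (simp add: invw_def l)
  moreover have "pres_eq H I ([(x, \<not>b)] @ (invw w @ w) @ [(x,b)]) ([(x, \<not>b)] @ [] @ [(x,b)])"
    using snoc v by (intro pres_eq_app pres_eq.refl) auto
  moreover have "pres_eq H I ([] @ [(x, \<not>b), (x, \<not>\<not>b)] @ []) ([] @ [])"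
    by (rule pres_eq.cancel) (use v in auto)
  ultimately show ?case by (auto intro: pres_eq.trans)
qed

lemma group_Gpres: "group (Gpres H I)"
proof (rule groupI)
  fix x y assume "x \<in> carrier (Gpres H I)" "y \<in> carrier (Gpres H I)"
  then show "x \<otimes>\<^bsub>Gpres H I\<^esub> y \<in> carrier (Gpres H I)"
    by (auto simp: Gcarrier Gmult)
next
  show "\<one>\<^bsub>Gpres H I\<^esub> \<in> carrier (Gpres H I)" by (auto simp: Gcarrier Gone intro: exI[of _ "[]"])
next
  fix x y z assume "x \<in> carrier (Gpres H I)" "y \<in> carrier (Gpres H I)" "z \<in> carrier (Gpres H I)"
  then show "x \<otimes>\<^bsub>Gpres H I\<^esub> y \<otimes>\<^bsub>Gpres H I\<^esub> z = x \<otimes>\<^bsub>Gpres H I\<^esub> (y \<otimes>\<^bsub>Gpres H I\<^esub> z)"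
    by (auto simp: Gcarrier Gmult)
next
  fix x assume "x \<in> carrier (Gpres H I)"
  then show "\<one>\<^bsub>Gpres H I\<^esub> \<otimes>\<^bsub>Gpres H I\<^esub> x = x"
    by (auto simp: Gcarrier Gmult Gone)
next
  fix x assume "x \<in> carrier (Gpres H I)"
  then obtain w where w: "x = cls H I w" "valid_word H w" by (auto simp: Gcarrier)
  then show "\<exists>y \<in> carrier (Gpres H I). y \<otimes>\<^bsub>Gpres H I\<^esub> x = \<one>\<^bsub>Gpres H I\<^esub>"
  proof (intro bexI)
    show "cls H I (invw w) \<in> carrier (Gpres H I)" using w by (auto simp: Gcarrier invw_valid)
    show "cls H I (invw w) \<otimes>\<^bsub>Gpres H I\<^esub> x = \<one>\<^bsub>Gpres H I\<^esub>"
      using w by (simp add: Gmult Gone invw_valid cls_eqI invw_cancel)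
  qed
qed

end

definition sd :: "'a set \<Rightarrow> 'a set \<Rightarrow> 'a set" where
  "sd A B = (A - B) \<union> (B - A)"

lemma finite_sd[simp]: "finite A \<Longrightarrow> finite B \<Longrightarrow> finite (sd A B)"
  by (simp add: sd_def)

lemma card_sd: "finite A \<Longrightarrow> finite B \<Longrightarrow> card A + card B = card (sd A B) + 2 * card (A \<inter> B)"
proof -
  assume f: "finite A" "finite B"
  have "card A + card B = card (A \<union> B) + card (A \<inter> B)" using f by (rule card_Un_Int)
  moreover have "A \<union> B = sd A B \<union> (A \<inter> B)" by (auto simp: sd_def)
  moreover have "card (sd A B \<union> (A \<inter> B)) = card (sd A B) + card (A \<inter> B)"
    using f by (intro card_Un_disjoint) (auto simp: sd_def)
  ultimately show ?thesis by simp
qed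

lemma odd_card_sd: "finite A \<Longrightarrow> finite B \<Longrightarrow> odd (card (sd A B)) = (odd (card A) \<noteq> odd (card B))"
  using card_sd[of A B] by (metis even_add even_mult_iff even_numeral)

lemma sd_filter: "{x \<in> sd A B. P x} = sd {x \<in> A. P x} {x \<in> B. P x}"
  by (auto simp: sd_def)

lemma odd_card_filter_xor: "finite A \<Longrightarrow>
   odd (card {x \<in> A. P x \<noteq> Q x}) = (odd (card {x \<in> A. P x}) \<noteq> odd (card {x \<in> A. Q x}))"
proof -
  assume f: "finite A"
  have "{x \<in> A. P x \<noteq> Q x} = sd {x \<in> A. P x} {x \<in> A. Q x}" by (auto simp: sd_def)
  then show ?thesis using f by (simp add: odd_card_sd)
qed

definition beta2 :: "('h,'m) monoid_scheme \<Rightarrow> 'h set \<Rightarrow> ('h \<Rightarrow> 'h \<Rightarrow> bool) \<Rightarrow> 'h set \<Rightarrow> 'h set \<Rightarrow> bool" where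
  "beta2 H I lt U V = odd (card {(g,p). g \<in> U \<and> p \<in> V \<and> lt p g \<and> inv\<^bsub>H\<^esub> g \<otimes>\<^bsub>H\<^esub> p \<in> I})"

lemma beta2_empty[simp]: "beta2 H I lt {} V = False" "beta2 H I lt U {} = False"
  by (auto simp: beta2_def)

lemma beta2_sd1: "finite A \<Longrightarrow> finite B \<Longrightarrow> finite V \<Longrightarrow>
  beta2 H I lt (sd A B) V = (beta2 H I lt A V \<noteq> beta2 H I lt B V)"
proof -
  assume f: "finite A" "finite B" "finite V"
  let ?Q = "\<lambda>(g,p). lt p g \<and> inv\<^bsub>H\<^esub> g \<otimes>\<^bsub>H\<^esub> p \<in> I"
  have e: "\<And>X. {(g,p). g \<in> X \<and> p \<in> V \<and> lt p g \<and> inv\<^bsub>H\<^esub> g \<otimes>\<^bsub>H\<^esub> p \<in> I} = {x \<in> X \<times> V. ?Q x}"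
    by auto
  have "{x \<in> sd A B \<times> V. ?Q x} = sd {x \<in> A \<times> V. ?Q x} {x \<in> B \<times> V. ?Q x}"
    by (auto simp: sd_def)
  then show ?thesis unfolding beta2_def e using f by (simp add: odd_card_sd)
qed

lemma beta2_sd2: "finite A \<Longrightarrow> finite B \<Longrightarrow> finite U \<Longrightarrow>
  beta2 H I lt U (sd A B) = (beta2 H I lt U A \<noteq> beta2 H I lt U B)"
proof -
  assume f: "finite A" "finite B" "finite U"
  let ?Q = "\<lambda>(g,p). lt p g \<and> inv\<^bsub>H\<^esub> g \<otimes>\<^bsub>H\<^esub> p \<in> I"
  have e: "\<And>X. {(g,p). g \<in> U \<and> p \<in> X \<and> lt p g \<and> inv\<^bsub>H\<^esub> g \<otimes>\<^bsub>H\<^esub> p \<in> I} = {x \<in> U \<times> X. ?Q x}"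
    by auto
  have "{x \<in> U \<times> sd A B. ?Q x} = sd {x \<in> U \<times> A. ?Q x} {x \<in> U \<times> B. ?Q x}"
    by (auto simp: sd_def)
  then show ?thesis unfolding beta2_def e using f by (simp add: odd_card_sd)
qed

lemma beta2_single: "beta2 H I lt {g} {p} = (lt p g \<and> inv\<^bsub>H\<^esub> g \<otimes>\<^bsub>H\<^esub> p \<in> I)"
proof -
  have "{(g',p'). g' \<in> {g} \<and> p' \<in> {p} \<and> lt p' g' \<and> inv\<^bsub>H\<^esub> g' \<otimes>\<^bsub>H\<^esub> p' \<in> I}
        = (if lt p g \<and> inv\<^bsub>H\<^esub> g \<otimes>\<^bsub>H\<^esub> p \<in> I then {(g,p)} else {})" by auto
  then show ?thesis by (simp add: beta2_def)
qed

fun step :: "('h,'m) monoid_scheme \<Rightarrow> 'h set \<Rightarrow> ('h \<Rightarrow> 'h \<Rightarrow> bool) \<Rightarrow>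
   ('h set \<times> 'h \<times> bool) \<Rightarrow> 'h gen \<times> bool \<Rightarrow> ('h set \<times> 'h \<times> bool)" where
  "step H I lt (u,k,e) (GH h, False) = (u, k \<otimes>\<^bsub>H\<^esub> h, e)"
| "step H I lt (u,k,e) (GH h, True) = (u, k \<otimes>\<^bsub>H\<^esub> inv\<^bsub>H\<^esub> h, e)"
| "step H I lt (u,k,e) (GA, b) = (sd u {k}, k, e \<noteq> beta2 H I lt u {k})"
| "step H I lt (u,k,e) (GZ, b) = (u, k, \<not> e)"

definition run where "run H I lt w s = foldl (step H I lt) s w"

lemma run_Nil[simp]: "run H I lt [] s = s" by (simp add: run_def)
lemma run_append[simp]: "run H I lt (v @ w) s = run H I lt w (run H I lt v s)" by (simp add: run_def)
lemma run_Cons[simp]: "run H I lt (l # w) s = run H I lt w (step H I lt s l)" by (simp add: run_def)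

definition good where "good H s \<longleftrightarrow> finite (fst s) \<and> fst (snd s) \<in> carrier H"

context
  fixes H :: "('h,'m) monoid_scheme" and I :: "'h set" and lt :: "'h \<Rightarrow> 'h \<Rightarrow> bool"
  assumes grpH: "group H"
    and one_notin: "\<one>\<^bsub>H\<^esub> \<notin> I"
    and I_inv: "\<And>h. h \<in> I \<Longrightarrow> inv\<^bsub>H\<^esub> h \<in> I"
    and lt_tot: "\<And>g h. g \<noteq> h \<Longrightarrow> lt g h \<longleftrightarrow> \<not> lt h g"
begin


lemmas mc = monoid.m_closed[OF group.is_monoid[OF grpH]]
lemmas ic = group.inv_closed[OF grpH]
lemmas massoc = monoid.m_assoc[OF group.is_monoid[OF grpH]]

lemma good_step: "good H s \<Longrightarrow> fst l \<in> gens H \<Longrightarrow> good H (step H I lt s l)"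
proof -
  assume a: "good H s" "fst l \<in> gens H"
  obtain u k e where s: "s = (u,k,e)" by (cases s)
  obtain x b where l: "l = (x,b)" by force
  show ?thesis
  proof (cases x)
    case (GH h)
    then show ?thesis using a s l by (cases b) (auto simp: good_def mc ic)
  next
    case GA then show ?thesis using a s l by (auto simp: good_def)
  next
    case GZ then show ?thesis using a s l by (auto simp: good_def)
  qed
qed

lemma good_run: "good H s \<Longrightarrow> valid_word H w \<Longrightarrow> good H (run H I lt w s)"
  by (induction w arbitrary: s) (auto simp: good_step)

lemma I_inv_iff: "h \<in> carrier H \<Longrightarrow> inv\<^bsub>H\<^esub> h \<in> I \<longleftrightarrow> h \<in> I"
  using I_inv group.inv_inv[OF grpH] by metis

lemma beta2_kk: "k \<in> carrier H \<Longrightarrow> beta2 H I lt {k} {k} = False"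
  using one_notin by (simp add: beta2_single group.l_inv[OF grpH])

lemma step_GA_GA: "finite u \<Longrightarrow> k \<in> carrier H \<Longrightarrow> step H I lt (step H I lt (u,k,e) (GA,b)) (GA,b') = (u,k,e)"
proof -
  assume f: "finite u" "k \<in> carrier H"
  have "sd (sd u {k}) {k} = u" by (auto simp: sd_def)
  then show ?thesis using f by (auto simp add: beta2_sd1 beta2_kk)
qed


lemma kinv: "k \<in> carrier H \<Longrightarrow> h \<in> carrier H \<Longrightarrow> k \<otimes>\<^bsub>H\<^esub> h \<otimes>\<^bsub>H\<^esub> inv\<^bsub>H\<^esub> h = k"
  by (simp add: massoc ic group.r_inv[OF grpH] monoid.r_one[OF group.is_monoid[OF grpH]])

lemma kinv2: "k \<in> carrier H \<Longrightarrow> h \<in> carrier H \<Longrightarrow> k \<otimes>\<^bsub>H\<^esub> inv\<^bsub>H\<^esub> h \<otimes>\<^bsub>H\<^esub> h = k"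
  by (simp add: massoc ic group.l_inv[OF grpH] monoid.r_one[OF group.is_monoid[OF grpH]])

lemma run_comm:
  assumes f: "finite u" and k: "k \<in> carrier H" and h: "h \<in> carrier H"
  shows "run H I lt (comm_word h @ (if h \<in> I then [(GZ,True)] else [])) (u,k,e) = (u,k,e)"
proof -
  let ?kh = "k \<otimes>\<^bsub>H\<^esub> h"
  have kh: "?kh \<in> carrier H" using k h by (simp add: mc)
  have lamp: "sd (sd (sd (sd u {k}) {?kh}) {k}) {?kh} = u" by (auto simp: sd_def)
  have l3: "sd (sd (sd u {k}) {?kh}) {k} = sd u {?kh}" by (auto simp: sd_def)
  have e1: "inv\<^bsub>H\<^esub> k \<otimes>\<^bsub>H\<^esub> ?kh = h"
    using k h by (simp add: massoc[symmetric] ic group.l_inv[OF grpH] monoid.l_one[OF group.is_monoid[OF grpH]])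
  have e2: "inv\<^bsub>H\<^esub> ?kh \<otimes>\<^bsub>H\<^esub> k = inv\<^bsub>H\<^esub> h"
    using k h by (simp add: group.inv_mult_group[OF grpH] massoc ic group.l_inv[OF grpH] monoid.r_one[OF group.is_monoid[OF grpH]])
  have key: "((lt ?kh k \<and> h \<in> I) \<noteq> (lt k ?kh \<and> inv\<^bsub>H\<^esub> h \<in> I)) = (h \<in> I)"
  proof (cases "h = \<one>\<^bsub>H\<^esub>")
    case True then show ?thesis using one_notin by (simp add: monoid.inv_one[OF group.is_monoid[OF grpH]])
  next
    case False
    then have "?kh \<noteq> k" using k h
      by (simp add: group.l_cancel_one[OF grpH])
    then show ?thesis using lt_tot[of ?kh k] I_inv_iff[OF h] by auto
  qed
  have "run H I lt (comm_word h) (u,k,e) =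
     (sd (sd (sd (sd u {k}) {?kh}) {k}) {?kh}, k,
      ((((e \<noteq> beta2 H I lt u {k}) \<noteq> beta2 H I lt (sd u {k}) {?kh})
        \<noteq> beta2 H I lt (sd (sd u {k}) {?kh}) {k})
        \<noteq> beta2 H I lt (sd (sd (sd u {k}) {?kh}) {k}) {?kh}))"
    by (simp add: comm_word_def kinv k h)
  also have "\<dots> = (u, k, e \<noteq> (h \<in> I))"
  proof -
    have s1: "beta2 H I lt {k} {?kh} = (lt ?kh k \<and> h \<in> I)"
      by (simp only: beta2_single e1)
    have s2: "beta2 H I lt {?kh} {k} = (lt k ?kh \<and> inv\<^bsub>H\<^esub> h \<in> I)"
      by (simp only: beta2_single e2)
    have fin: "finite {k}" "finite {?kh}" "finite (sd u {k})" using f by auto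
    have b2: "beta2 H I lt (sd u {k}) {?kh} = (beta2 H I lt u {?kh} \<noteq> (lt ?kh k \<and> h \<in> I))"
      using beta2_sd1[where H=H and I=I and lt=lt, OF f fin(1) fin(2)] s1 by simp
    have b3: "beta2 H I lt (sd (sd u {k}) {?kh}) {k} = (beta2 H I lt u {k} \<noteq> (lt k ?kh \<and> inv\<^bsub>H\<^esub> h \<in> I))"
      using beta2_sd1[where H=H and I=I and lt=lt, OF fin(3) fin(2) fin(1)] beta2_sd1[where H=H and I=I and lt=lt, OF f fin(1) fin(1)] s2 beta2_kk[OF k] by simp
    have b4: "beta2 H I lt (sd u {?kh}) {?kh} = beta2 H I lt u {?kh}"
      using beta2_sd1[where H=H and I=I and lt=lt, OF f fin(2) fin(2)] beta2_kk[OF kh] by simp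
    have l4: "sd (sd u {?kh}) {?kh} = u" by (auto simp: sd_def)
    show ?thesis unfolding lamp l3 l4 b2 b3 b4 using key by auto
  qed
  finally show ?thesis by auto
qed


lemma run_relator: "r \<in> relators H I \<Longrightarrow> good H s \<Longrightarrow> run H I lt r s = s"
proof -
  assume r: "r \<in> relators H I" and g: "good H s"
  obtain u k e where s: "s = (u,k,e)" by (cases s)
  have f: "finite u" and k: "k \<in> carrier H" using g s by (auto simp: good_def)
  from r consider
      (hh) g h where "r = [(GH g,False),(GH h,False),(GH (g \<otimes>\<^bsub>H\<^esub> h),True)]" "g \<in> carrier H" "h \<in> carrier H"
    | (zz) "r = [(GZ,False),(GZ,False)]"
    | (aa) "r = [(GA,False),(GA,False)]"
    | (zc) x where "r = [(GZ,False),(x,False),(GZ,True),(x,True)]" "x \<in> gens H"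
    | (cm) h where "r = comm_word h @ (if h \<in> I then [(GZ,True)] else [])" "h \<in> carrier H"
    unfolding relators_def by blast
  then show ?thesis
  proof cases
    case (hh g h)
    have "k \<otimes>\<^bsub>H\<^esub> g \<otimes>\<^bsub>H\<^esub> h \<otimes>\<^bsub>H\<^esub> inv\<^bsub>H\<^esub> (g \<otimes>\<^bsub>H\<^esub> h) = k"
      using hh k by (simp add: massoc mc kinv)
    then show ?thesis using hh s by simp
  next
    case zz then show ?thesis using s by simp
  next
    case aa then show ?thesis using s f k step_GA_GA by simp
  next
    case (zc x)
    show ?thesis
    proof (cases x)
      case (GH h) then show ?thesis using zc s k by (simp add: kinv)
    next
      case GA
      have "sd (sd u {k}) {k} = u" by (auto simp: sd_def)
      then show ?thesis using zc s GA f k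
        by (auto simp: beta2_sd1[where H=H and I=I and lt=lt] beta2_kk)
    next
      case GZ then show ?thesis using zc s by simp
    qed
  next
    case (cm h) then show ?thesis using s f k run_comm by simp
  qed
qed

lemma run_pres_eq: "pres_eq H I w w' \<Longrightarrow> good H s \<Longrightarrow> run H I lt w s = run H I lt w' s"
proof (induction arbitrary: s rule: pres_eq.induct)
  case (refl w) then show ?case by simp
next
  case (sym u v) then show ?case by simp
next
  case (trans u v w) then show ?case by simp
next
  case (cancel u v x b)
  have g: "good H (run H I lt u s)" using cancel good_run by blast
  obtain u' k e where s: "run H I lt u s = (u',k,e)" by (cases "run H I lt u s")
  have f: "finite u'" "k \<in> carrier H" using g s by (auto simp: good_def)
  have "step H I lt (step H I lt (u',k,e) (x,b)) (x, \<not>b) = (u',k,e)"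
  proof (cases x)
    case (GH h) then show ?thesis using cancel f by (cases b) (auto simp: kinv kinv2)
  next
    case GA then show ?thesis using f step_GA_GA by simp
  next
    case GZ then show ?thesis by simp
  qed
  then show ?case using s by simp
next
  case (relator u v r)
  have g: "good H (run H I lt u s)" using relator good_run by blast
  then show ?case using relator run_relator by simp
qed

end

definition tr :: "('h,'m) monoid_scheme \<Rightarrow> 'h \<Rightarrow> 'h set \<Rightarrow> 'h set" where
  "tr H k S = (\<lambda>p. k \<otimes>\<^bsub>H\<^esub> p) ` S"

definition Ew where "Ew H I lt w k = snd (snd (run H I lt w ({}, k, False)))"

lemma word_pi_Nil[simp]: "word_pi H [] = \<one>\<^bsub>H\<^esub>" by (simp add: word_pi_def)
lemma word_supp_Nil[simp]: "word_supp H [] = {}" by (simp add: word_supp_def)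

context
  fixes H :: "('h,'m) monoid_scheme"
  assumes grpH: "group H"
begin

lemma linj: "k \<in> carrier H \<Longrightarrow> p \<in> carrier H \<Longrightarrow> q \<in> carrier H \<Longrightarrow> k \<otimes>\<^bsub>H\<^esub> p = k \<otimes>\<^bsub>H\<^esub> q \<longleftrightarrow> p = q"
  using monoid.Units_l_cancel[OF group.is_monoid[OF grpH]] group.Units_eq[OF grpH] by blast

lemmas mc' = monoid.m_closed[OF group.is_monoid[OF grpH]]
lemmas ic' = group.inv_closed[OF grpH]
lemmas massoc' = monoid.m_assoc[OF group.is_monoid[OF grpH]]

lemma letter_val_closed: "fst l \<in> gens H \<Longrightarrow> letter_val H l \<in> carrier H"
  by (cases l; rename_tac x b; case_tac x; case_tac b) (auto simp: ic' monoid.one_closed[OF group.is_monoid[OF grpH]])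

lemma word_pi_closed: "valid_word H w \<Longrightarrow> word_pi H w \<in> carrier H"
  by (induction w) (auto simp: word_pi_def mc' letter_val_closed monoid.one_closed[OF group.is_monoid[OF grpH]])


lemma word_pi_append: "valid_word H w \<Longrightarrow> valid_word H v \<Longrightarrow> word_pi H (w @ v) = word_pi H w \<otimes>\<^bsub>H\<^esub> word_pi H v"
proof (induction w)
  case Nil then show ?case
    by (simp add: word_pi_closed monoid.l_one[OF group.is_monoid[OF grpH]])
next
  case (Cons l w)
  have "word_pi H ((l # w) @ v) = letter_val H l \<otimes>\<^bsub>H\<^esub> word_pi H (w @ v)" by (simp add: word_pi_def)
  also have "\<dots> = letter_val H l \<otimes>\<^bsub>H\<^esub> (word_pi H w \<otimes>\<^bsub>H\<^esub> word_pi H v)" using Cons by simp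
  also have "\<dots> = word_pi H (l # w) \<otimes>\<^bsub>H\<^esub> word_pi H v"
    using Cons by (simp add: word_pi_def[of H "l # w"] massoc' letter_val_closed word_pi_closed word_pi_def[symmetric])
  finally show ?case .
qed

lemma word_pi_snoc: "valid_word H (w @ [l]) \<Longrightarrow> word_pi H (w @ [l]) = word_pi H w \<otimes>\<^bsub>H\<^esub> letter_val H l"
  using word_pi_append[of w "[l]"] letter_val_closed[of l]
  by (simp add: word_pi_def monoid.r_one[OF group.is_monoid[OF grpH]])


lemma word_supp_snoc: "valid_word H (w @ [l]) \<Longrightarrow>
  word_supp H (w @ [l]) = (if fst l = GA then sd (word_supp H w) {word_pi H w} else word_supp H w)"
proof -
  assume v: "valid_word H (w @ [l])"
  have pc: "word_pi H w \<in> carrier H" using v word_pi_closed by simp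
  have key: "\<And>p. {i. i < length (w @ [l]) \<and> fst ((w @ [l]) ! i) = GA \<and> word_pi H (take i (w @ [l])) = p}
     = {i. i < length w \<and> fst (w ! i) = GA \<and> word_pi H (take i w) = p}
       \<union> (if fst l = GA \<and> word_pi H w = p then {length w} else {})"
    by (auto simp: nth_append less_Suc_eq)
  have cnt: "\<And>p. odd (card {i. i < length (w @ [l]) \<and> fst ((w @ [l]) ! i) = GA \<and> word_pi H (take i (w @ [l])) = p})
     = (odd (card {i. i < length w \<and> fst (w ! i) = GA \<and> word_pi H (take i w) = p}) \<noteq> (fst l = GA \<and> word_pi H w = p))"
  proof -
    fix p
    have fin: "finite {i. i < length w \<and> fst (w ! i) = GA \<and> word_pi H (take i w) = p}" by simp
    show "?thesis p" unfolding key using fin by (auto simp: card_insert_if)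
  qed
  show ?thesis
    unfolding word_supp_def cnt using pc by (auto simp: sd_def)
qed

lemma word_supp_sub: "word_supp H w \<subseteq> carrier H" by (auto simp: word_supp_def)

lemma word_supp_finite: "valid_word H w \<Longrightarrow> finite (word_supp H w)"
proof (induction w rule: rev_induct)
  case Nil then show ?case by simp
next
  case (snoc l w) then show ?case by (simp add: word_supp_snoc)
qed

lemma tr_one: "S \<subseteq> carrier H \<Longrightarrow> tr H \<one>\<^bsub>H\<^esub> S = S"
  by (auto simp: tr_def monoid.l_one[OF group.is_monoid[OF grpH]] subset_eq image_iff)

lemma tr_sd: "S \<subseteq> carrier H \<Longrightarrow> q \<in> carrier H \<Longrightarrow> k \<in> carrier H \<Longrightarrow>
   tr H k (sd S {q}) = sd (tr H k S) {k \<otimes>\<^bsub>H\<^esub> q}"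
  unfolding tr_def sd_def using linj by (auto simp: subset_eq) 

lemma finite_tr[simp]: "finite S \<Longrightarrow> finite (tr H k S)" by (simp add: tr_def)

end

context
  fixes H :: "('h,'m) monoid_scheme" and I :: "'h set" and lt :: "'h \<Rightarrow> 'h \<Rightarrow> bool"
  assumes grpH: "group H"
begin

lemmas mcB = monoid.m_closed[OF group.is_monoid[OF grpH]]
lemmas icB = group.inv_closed[OF grpH]
lemmas massocB = monoid.m_assoc[OF group.is_monoid[OF grpH]]

lemma run_formula:
  assumes "valid_word H w"
  shows "finite u \<Longrightarrow> k \<in> carrier H \<Longrightarrow> run H I lt w (u,k,e) =
    (sd u (tr H k (word_supp H w)), k \<otimes>\<^bsub>H\<^esub> word_pi H w,
     (e \<noteq> beta2 H I lt u (tr H k (word_supp H w))) \<noteq> Ew H I lt w k)"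
  using assms
proof (induction w arbitrary: u e rule: rev_induct)
  case Nil then show ?case
    by (simp add: Ew_def tr_def sd_def monoid.r_one[OF group.is_monoid[OF grpH]])
next
  case (snoc l w)
  have vw: "valid_word H w" and vl: "fst l \<in> gens H" using snoc.prems by auto
  have f: "finite u" and k: "k \<in> carrier H" by fact+
  define S where "S = word_supp H w"
  define L where "L = tr H k S"
  define q where "q = k \<otimes>\<^bsub>H\<^esub> word_pi H w"
  define E where "E = Ew H I lt w k"
  have Sc: "S \<subseteq> carrier H" "finite S" using word_supp_sub[OF grpH] word_supp_finite[OF grpH vw] by (auto simp: S_def)
  have fL: "finite L" using Sc by (simp add: L_def tr_def)
  have pw: "word_pi H w \<in> carrier H" using word_pi_closed[OF grpH vw] .
  have IH: "\<And>u e. finite u \<Longrightarrow> run H I lt w (u,k,e) = (sd u L, q, (e \<noteq> beta2 H I lt u L) \<noteq> E)"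
    using snoc.IH vw k by (simp add: L_def q_def E_def S_def)
  have r: "run H I lt (w @ [l]) (u,k,e) = step H I lt (sd u L, q, (e \<noteq> beta2 H I lt u L) \<noteq> E) l"
    using IH f by simp
  have sd0: "sd {} L = L" by (simp add: sd_def)
  have r0: "Ew H I lt (w @ [l]) k = snd (snd (step H I lt (L, q, E) l))"
    using IH[of "{}" False] sd0 by (simp add: Ew_def)
  obtain x b where l: "l = (x,b)" by force
  show ?case
  proof (cases x)
    case (GH h)
    have h: "h \<in> carrier H" using vl l GH by simp
    show ?thesis
    proof (cases b)
      case True
      have pi: "word_pi H (w @ [l]) = word_pi H w \<otimes>\<^bsub>H\<^esub> inv\<^bsub>H\<^esub> h"
        using word_pi_snoc[OF grpH snoc.prems(3)] l GH True by simp
      have hi: "inv\<^bsub>H\<^esub> h \<in> carrier H" using h icB by blast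
      have as: "k \<otimes>\<^bsub>H\<^esub> word_pi H w \<otimes>\<^bsub>H\<^esub> inv\<^bsub>H\<^esub> h = k \<otimes>\<^bsub>H\<^esub> (word_pi H w \<otimes>\<^bsub>H\<^esub> inv\<^bsub>H\<^esub> h)"
        using massocB[OF k pw hi] .
      show ?thesis using r r0 pi word_supp_snoc[OF grpH snoc.prems(3)] unfolding l GH
        by (simp add: as True L_def S_def q_def massocB k pw h icB)
    next
      case False
      have pi: "word_pi H (w @ [l]) = word_pi H w \<otimes>\<^bsub>H\<^esub> h"
        using word_pi_snoc[OF grpH snoc.prems(3)] l GH False by simp
      show ?thesis using r r0 pi word_supp_snoc[OF grpH snoc.prems(3)] unfolding l GH
        by (simp add: False L_def S_def q_def massocB k pw h)
    qed
  next
    case GA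
    have pi: "word_pi H (w @ [l]) = word_pi H w"
      using word_pi_snoc[OF grpH snoc.prems(3)] l GA pw by (simp add: monoid.r_one[OF group.is_monoid[OF grpH]])
    have su: "tr H k (word_supp H (w @ [l])) = sd L {q}"
      using word_supp_snoc[OF grpH snoc.prems(3)] l GA tr_sd[OF grpH Sc(1) pw k] by (simp add: L_def S_def q_def)
    have lamp: "sd (sd u L) {q} = sd u (sd L {q})" by (auto simp: sd_def)
    have b1: "beta2 H I lt (sd u L) {q} = (beta2 H I lt u {q} \<noteq> beta2 H I lt L {q})"
      using beta2_sd1[where H=H and I=I and lt=lt and V="{q}", OF f fL] by simp
    have b2: "beta2 H I lt u (sd L {q}) = (beta2 H I lt u L \<noteq> beta2 H I lt u {q})"
      using beta2_sd2[where H=H and I=I and lt=lt and B="{q}", OF fL _ f] by simp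
    have e0: "Ew H I lt (w @ [l]) k = (E \<noteq> beta2 H I lt L {q})" using r0 l GA by simp
    show ?thesis using r pi su e0 unfolding l GA
      apply (simp add: lamp b1 b2)
      by (simp add: q_def) blast
  next
    case GZ
    have pi: "word_pi H (w @ [l]) = word_pi H w"
      using word_pi_snoc[OF grpH snoc.prems(3)] l GZ pw by (simp add: monoid.r_one[OF group.is_monoid[OF grpH]])
    show ?thesis using r r0 pi word_supp_snoc[OF grpH snoc.prems(3)] unfolding l GZ
      by (simp add: L_def S_def q_def)
  qed
qed

end

definition Dk where "Dk H I lt k S = odd (card {(g,h). g \<in> S \<and> h \<in> S \<and> lt h g \<and>
     lt (k \<otimes>\<^bsub>H\<^esub> g) (k \<otimes>\<^bsub>H\<^esub> h) \<and> inv\<^bsub>H\<^esub> g \<otimes>\<^bsub>H\<^esub> h \<in> I})"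

lemma Dk_empty[simp]: "Dk H I lt k {} = False" by (simp add: Dk_def)

lemma beta2_single2: "beta2 H I lt U {p} = odd (card {g \<in> U. lt p g \<and> inv\<^bsub>H\<^esub> g \<otimes>\<^bsub>H\<^esub> p \<in> I})"
proof -
  have "{(g,p'). g \<in> U \<and> p' \<in> {p} \<and> lt p' g \<and> inv\<^bsub>H\<^esub> g \<otimes>\<^bsub>H\<^esub> p' \<in> I}
     = (\<lambda>g. (g,p)) ` {g \<in> U. lt p g \<and> inv\<^bsub>H\<^esub> g \<otimes>\<^bsub>H\<^esub> p \<in> I}" by auto
  moreover have "inj_on (\<lambda>g. (g,p)) X" for X by (auto simp: inj_on_def)
  moreover have "card ((\<lambda>g. (g,p)) ` {g \<in> U. lt p g \<and> inv\<^bsub>H\<^esub> g \<otimes>\<^bsub>H\<^esub> p \<in> I}) = card {g \<in> U. lt p g \<and> inv\<^bsub>H\<^esub> g \<otimes>\<^bsub>H\<^esub> p \<in> I}"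
    by (rule card_image) (auto simp: inj_on_def)
  ultimately show ?thesis by (simp add: beta2_def)
qed

context
  fixes H :: "('h,'m) monoid_scheme" and I :: "'h set" and lt :: "'h \<Rightarrow> 'h \<Rightarrow> bool"
  assumes grpH: "group H"
    and one_notin: "\<one>\<^bsub>H\<^esub> \<notin> I"
    and I_inv: "\<And>h. h \<in> I \<Longrightarrow> inv\<^bsub>H\<^esub> h \<in> I"
    and lt_tot: "\<And>g h. g \<noteq> h \<Longrightarrow> lt g h \<longleftrightarrow> \<not> lt h g"
begin

lemmas mcC = monoid.m_closed[OF group.is_monoid[OF grpH]]
lemmas icC = group.inv_closed[OF grpH]
lemmas massocC = monoid.m_assoc[OF group.is_monoid[OF grpH]]

lemma inv_prod_I: "g \<in> carrier H \<Longrightarrow> q \<in> carrier H \<Longrightarrow> inv\<^bsub>H\<^esub> q \<otimes>\<^bsub>H\<^esub> g \<in> I \<longleftrightarrow> inv\<^bsub>H\<^esub> g \<otimes>\<^bsub>H\<^esub> q \<in> I"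
proof -
  assume c: "g \<in> carrier H" "q \<in> carrier H"
  have "inv\<^bsub>H\<^esub> (inv\<^bsub>H\<^esub> q \<otimes>\<^bsub>H\<^esub> g) = inv\<^bsub>H\<^esub> g \<otimes>\<^bsub>H\<^esub> q"
    using c by (simp add: group.inv_mult_group[OF grpH] icC group.inv_inv[OF grpH])
  moreover have "inv\<^bsub>H\<^esub> (inv\<^bsub>H\<^esub> g \<otimes>\<^bsub>H\<^esub> q) = inv\<^bsub>H\<^esub> q \<otimes>\<^bsub>H\<^esub> g"
    using c by (simp add: group.inv_mult_group[OF grpH] icC group.inv_inv[OF grpH])
  ultimately show ?thesis using I_inv by metis
qed

lemma inv_kk: "g \<in> carrier H \<Longrightarrow> q \<in> carrier H \<Longrightarrow> k \<in> carrier H \<Longrightarrow>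
   inv\<^bsub>H\<^esub> (k \<otimes>\<^bsub>H\<^esub> g) \<otimes>\<^bsub>H\<^esub> (k \<otimes>\<^bsub>H\<^esub> q) = inv\<^bsub>H\<^esub> g \<otimes>\<^bsub>H\<^esub> q"
proof -
  assume c: "g \<in> carrier H" "q \<in> carrier H" "k \<in> carrier H"
  have "inv\<^bsub>H\<^esub> (k \<otimes>\<^bsub>H\<^esub> g) \<otimes>\<^bsub>H\<^esub> (k \<otimes>\<^bsub>H\<^esub> q) = inv\<^bsub>H\<^esub> g \<otimes>\<^bsub>H\<^esub> (inv\<^bsub>H\<^esub> k \<otimes>\<^bsub>H\<^esub> k) \<otimes>\<^bsub>H\<^esub> q"
    using c by (simp add: group.inv_mult_group[OF grpH] icC massocC mcC)
  also have "\<dots> = inv\<^bsub>H\<^esub> g \<otimes>\<^bsub>H\<^esub> q"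
    using c by (simp add: group.l_inv[OF grpH] icC monoid.r_one[OF group.is_monoid[OF grpH]])
  finally show ?thesis .
qed

lemma beta2_tr: "S \<subseteq> carrier H \<Longrightarrow> q \<in> carrier H \<Longrightarrow> k \<in> carrier H \<Longrightarrow>
  beta2 H I lt (tr H k S) {k \<otimes>\<^bsub>H\<^esub> q} = odd (card {g \<in> S. lt (k \<otimes>\<^bsub>H\<^esub> q) (k \<otimes>\<^bsub>H\<^esub> g) \<and> inv\<^bsub>H\<^esub> g \<otimes>\<^bsub>H\<^esub> q \<in> I})"
proof -
  assume c: "S \<subseteq> carrier H" "q \<in> carrier H" "k \<in> carrier H"
  have "{g' \<in> tr H k S. lt (k \<otimes>\<^bsub>H\<^esub> q) g' \<and> inv\<^bsub>H\<^esub> g' \<otimes>\<^bsub>H\<^esub> (k \<otimes>\<^bsub>H\<^esub> q) \<in> I}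
     = (\<lambda>g. k \<otimes>\<^bsub>H\<^esub> g) ` {g \<in> S. lt (k \<otimes>\<^bsub>H\<^esub> q) (k \<otimes>\<^bsub>H\<^esub> g) \<and> inv\<^bsub>H\<^esub> g \<otimes>\<^bsub>H\<^esub> q \<in> I}"
    using c inv_kk by (auto simp: tr_def subset_eq)
  moreover have "inj_on (\<lambda>g. k \<otimes>\<^bsub>H\<^esub> g) {g \<in> S. lt (k \<otimes>\<^bsub>H\<^esub> q) (k \<otimes>\<^bsub>H\<^esub> g) \<and> inv\<^bsub>H\<^esub> g \<otimes>\<^bsub>H\<^esub> q \<in> I}"
    using c linj[OF grpH] by (auto simp: inj_on_def subset_eq)
  ultimately show ?thesis by (simp add: beta2_single2 card_image)
qed

lemma Dk_sd:
  assumes S: "S \<subseteq> carrier H" "finite S" and q: "q \<in> carrier H" and k: "k \<in> carrier H"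
  shows "Dk H I lt k (sd S {q}) =
    ((Dk H I lt k S \<noteq> beta2 H I lt (tr H k S) {k \<otimes>\<^bsub>H\<^esub> q}) \<noteq> beta2 H I lt S {q})"
proof -
  define P where "P g h \<longleftrightarrow> lt h g \<and> lt (k \<otimes>\<^bsub>H\<^esub> g) (k \<otimes>\<^bsub>H\<^esub> h) \<and> inv\<^bsub>H\<^esub> g \<otimes>\<^bsub>H\<^esub> h \<in> I" for g h
  define Pairs where "Pairs X = {(g,h). g \<in> X \<and> h \<in> X \<and> P g h}" for X
  define A where "A = {g \<in> S - {q}. P g q}"
  define B where "B = {h \<in> S - {q}. P q h}"
  define X where "X = (\<lambda>g. (g,q)) ` A \<union> (\<lambda>h. (q,h)) ` B"
  have Pqq: "\<not> P q q" using q one_notin by (simp add: P_def group.l_inv[OF grpH])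
  have D_eq: "Dk H I lt k Y = odd (card (Pairs Y))" for Y by (simp add: Dk_def Pairs_def P_def)
  have pairs: "Pairs (sd S {q}) = sd (Pairs S) X"
    using Pqq by (auto simp: Pairs_def sd_def X_def A_def B_def)
  have finP: "finite (Pairs S)"
  proof -
    have "Pairs S \<subseteq> S \<times> S" by (auto simp: Pairs_def)
    then show ?thesis using S by (meson finite_SigmaI rev_finite_subset)
  qed
  have fA: "finite A" "finite B" using S by (auto simp: A_def B_def)
  have c1: "card ((\<lambda>g. (g,q)) ` A) = card A" by (rule card_image) (auto simp: inj_on_def)
  have c2: "card ((\<lambda>h. (q,h)) ` B) = card B" by (rule card_image) (auto simp: inj_on_def)
  have dj: "(\<lambda>g. (g,q)) ` A \<inter> (\<lambda>h. (q,h)) ` B = {}" by (auto simp: A_def)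
  have cX: "card X = card A + card B"
    unfolding X_def using card_Un_disjoint[OF _ _ dj] fA c1 c2 by simp
  have fX: "finite X" using fA by (simp add: X_def)
  have D1: "Dk H I lt k (sd S {q}) = (Dk H I lt k S \<noteq> (odd (card A) \<noteq> odd (card B)))"
    unfolding D_eq pairs using odd_card_sd[OF finP fX] cX by simp
  define C where "C = {g \<in> S. (lt (k \<otimes>\<^bsub>H\<^esub> q) (k \<otimes>\<^bsub>H\<^esub> g) \<noteq> lt q g) \<and> inv\<^bsub>H\<^esub> g \<otimes>\<^bsub>H\<^esub> q \<in> I}"
  have bx: "(beta2 H I lt (tr H k S) {k \<otimes>\<^bsub>H\<^esub> q} \<noteq> beta2 H I lt S {q}) = odd (card C)"
  proof -
    define Pk where "Pk g \<longleftrightarrow> lt (k \<otimes>\<^bsub>H\<^esub> q) (k \<otimes>\<^bsub>H\<^esub> g) \<and> inv\<^bsub>H\<^esub> g \<otimes>\<^bsub>H\<^esub> q \<in> I" for g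
    define Pq where "Pq g \<longleftrightarrow> lt q g \<and> inv\<^bsub>H\<^esub> g \<otimes>\<^bsub>H\<^esub> q \<in> I" for g
    have Ceq: "C = {g \<in> S. Pk g \<noteq> Pq g}" by (auto simp: C_def Pk_def Pq_def)
    have e1: "beta2 H I lt (tr H k S) {k \<otimes>\<^bsub>H\<^esub> q} = odd (card {g \<in> S. Pk g})"
      using beta2_tr[OF S(1) q k] by (simp add: Pk_def)
    have e2: "beta2 H I lt S {q} = odd (card {g \<in> S. Pq g})"
      using beta2_single2[where H=H and I=I and lt=lt and U=S and p=q] by (simp add: Pq_def)
    have e3: "odd (card {g \<in> S. Pk g \<noteq> Pq g}) = (odd (card {g \<in> S. Pk g}) \<noteq> odd (card {g \<in> S. Pq g}))"
      by (rule odd_card_filter_xor[OF S(2)])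
    show ?thesis by (simp only: e1 e2 Ceq e3)
  qed
  have CAB: "C = A \<union> B"
  proof
    show "C \<subseteq> A \<union> B"
    proof
      fix g assume g: "g \<in> C"
      then have gS: "g \<in> S" and gc: "g \<in> carrier H" using S by (auto simp: C_def)
      have gq: "g \<noteq> q" using g q one_notin by (auto simp: C_def group.l_inv[OF grpH])
      then have kgq: "k \<otimes>\<^bsub>H\<^esub> g \<noteq> k \<otimes>\<^bsub>H\<^esub> q" using linj[OF grpH k gc q] by simp
      show "g \<in> A \<union> B"
        using g gS gq lt_tot[OF gq] lt_tot[OF kgq] inv_prod_I[OF gc q]
        by (auto simp: C_def A_def B_def P_def)
    qed
  next
    show "A \<union> B \<subseteq> C"
    proof
      fix g assume g: "g \<in> A \<union> B"
      then have gS: "g \<in> S" and gc: "g \<in> carrier H" and gq: "g \<noteq> q" using S by (auto simp: A_def B_def)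
      then have kgq: "k \<otimes>\<^bsub>H\<^esub> g \<noteq> k \<otimes>\<^bsub>H\<^esub> q" using linj[OF grpH k gc q] by simp
      show "g \<in> C"
        using g gS gq lt_tot[OF gq] lt_tot[OF kgq] inv_prod_I[OF gc q]
        by (auto simp: C_def A_def B_def P_def)
    qed
  qed
  have ABd: "A \<inter> B = {}"
    using lt_tot by (auto simp: A_def B_def P_def)
  have "odd (card C) = (odd (card A) \<noteq> odd (card B))"
    unfolding CAB using card_Un_disjoint[OF fA ABd] by simp
  then show ?thesis using D1 bx by auto
qed


lemma Ew_snoc: "valid_word H (w @ [l]) \<Longrightarrow> k \<in> carrier H \<Longrightarrow>
  Ew H I lt (w @ [l]) k = snd (snd (step H I lt (tr H k (word_supp H w), k \<otimes>\<^bsub>H\<^esub> word_pi H w, Ew H I lt w k) l))"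
proof -
  assume v: "valid_word H (w @ [l])" and k: "k \<in> carrier H"
  have "run H I lt w ({},k,False) = (tr H k (word_supp H w), k \<otimes>\<^bsub>H\<^esub> word_pi H w, Ew H I lt w k)"
    using run_formula[OF grpH, of w "{}" k I lt False] v k by (simp add: sd_def)
  then show ?thesis by (simp add: Ew_def)
qed

lemma Ew_shift: "valid_word H w \<Longrightarrow> k \<in> carrier H \<Longrightarrow>
   Ew H I lt w k = (Ew H I lt w \<one>\<^bsub>H\<^esub> \<noteq> Dk H I lt k (word_supp H w))"
proof (induction w rule: rev_induct)
  case Nil then show ?case by (simp add: Ew_def)
next
  case (snoc l w)
  have vw: "valid_word H w" and vl: "fst l \<in> gens H" using snoc.prems by auto
  have k: "k \<in> carrier H" by fact
  have one: "\<one>\<^bsub>H\<^esub> \<in> carrier H" by (simp add: monoid.one_closed[OF group.is_monoid[OF grpH]])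
  define S where "S = word_supp H w"
  have Sc: "S \<subseteq> carrier H" "finite S" using word_supp_sub[OF grpH] word_supp_finite[OF grpH vw] by (auto simp: S_def)
  have pw: "word_pi H w \<in> carrier H" using word_pi_closed[OF grpH vw] .
  have IH: "Ew H I lt w k = (Ew H I lt w \<one>\<^bsub>H\<^esub> \<noteq> Dk H I lt k S)" using snoc vw by (simp add: S_def)
  have ek: "Ew H I lt (w @ [l]) k = snd (snd (step H I lt (tr H k S, k \<otimes>\<^bsub>H\<^esub> word_pi H w, Ew H I lt w k) l))"
    using Ew_snoc[OF snoc.prems(1) k] by (simp add: S_def)
  have e1: "Ew H I lt (w @ [l]) \<one>\<^bsub>H\<^esub> = snd (snd (step H I lt (S, word_pi H w, Ew H I lt w \<one>\<^bsub>H\<^esub>) l))"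
    using Ew_snoc[OF snoc.prems(1) one] tr_one[OF grpH Sc(1)] pw
    by (simp add: S_def monoid.l_one[OF group.is_monoid[OF grpH]])
  obtain x b where l: "l = (x,b)" by force
  show ?case
  proof (cases x)
    case (GH h)
    then show ?thesis using ek e1 IH word_supp_snoc[OF grpH snoc.prems(1)] l
      by (cases b) (simp_all add: S_def)
  next
    case GZ
    then show ?thesis using ek e1 IH word_supp_snoc[OF grpH snoc.prems(1)] l
      by (simp add: S_def)
  next
    case GA
    have su: "word_supp H (w @ [l]) = sd S {word_pi H w}"
      using word_supp_snoc[OF grpH snoc.prems(1)] l GA by (simp add: S_def)
    have D: "Dk H I lt k (sd S {word_pi H w}) =
      ((Dk H I lt k S \<noteq> beta2 H I lt (tr H k S) {k \<otimes>\<^bsub>H\<^esub> word_pi H w}) \<noteq> beta2 H I lt S {word_pi H w})"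
      by (rule Dk_sd[OF Sc pw k])
    show ?thesis using ek e1 IH l GA unfolding su D by auto
  qed
qed

lemma Ew_invariant: "valid_word H w \<Longrightarrow> k \<in> carrier H \<Longrightarrow> word_supp H w = {} \<Longrightarrow>
   Ew H I lt w k = Ew H I lt w \<one>\<^bsub>H\<^esub>"
  using Ew_shift by simp

end

lemma (in group) comm_from:
  assumes a: "a \<in> carrier G" and b: "b \<in> carrier G" and e: "a \<otimes> b \<otimes> inv a \<otimes> inv b = \<one>"
  shows "a \<otimes> b = b \<otimes> a"
proof -
  have i: "inv a \<otimes> (inv b \<otimes> (b \<otimes> a)) = \<one>"
    using a b by (simp add: m_assoc[symmetric])
  have "a \<otimes> b = (a \<otimes> b) \<otimes> (inv a \<otimes> (inv b \<otimes> (b \<otimes> a)))"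
    using i a b by simp
  also have "\<dots> = (a \<otimes> b \<otimes> inv a \<otimes> inv b) \<otimes> (b \<otimes> a)"
    using a b by (simp add: m_assoc)
  finally have "a \<otimes> b = (a \<otimes> b \<otimes> inv a \<otimes> inv b) \<otimes> (b \<otimes> a)" .
  also have "\<dots> = b \<otimes> a" using e a b by simp
  finally show ?thesis .
qed

lemma (in group) cancel_left1: "x \<in> carrier G \<Longrightarrow> y \<in> carrier G \<Longrightarrow> x \<otimes> (inv x \<otimes> y) = y"
  by (simp add: m_assoc[symmetric])
lemma (in group) cancel_left2: "x \<in> carrier G \<Longrightarrow> y \<in> carrier G \<Longrightarrow> inv x \<otimes> (x \<otimes> y) = y"
  by (simp add: m_assoc[symmetric])

lemma (in group) commutes_inv:
  assumes x: "x \<in> carrier G" and y: "y \<in> carrier G" and e: "x \<otimes> y = y \<otimes> x"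
  shows "inv x \<otimes> y = y \<otimes> inv x"
proof -
  have "inv x \<otimes> y = inv x \<otimes> y \<otimes> (x \<otimes> inv x)" using x y by simp
  also have "\<dots> = inv x \<otimes> (y \<otimes> x) \<otimes> inv x" using x y by (simp add: m_assoc)
  also have "\<dots> = inv x \<otimes> (x \<otimes> y) \<otimes> inv x" using e by simp
  also have "\<dots> = y \<otimes> inv x" using x y by (simp add: m_assoc[symmetric])
  finally show ?thesis .
qed

lemma (in group) swap_lemma:
  assumes c0: "a \<in> carrier G" "c \<in> carrier G" "t \<in> carrier G"
    and aa: "a \<otimes> a = \<one>" and cc: "c \<otimes> c = \<one>" and tt: "t \<otimes> t = \<one>" and tc: "t \<otimes> c = c \<otimes> t"
    and e: "a \<otimes> (c \<otimes> (a \<otimes> (c \<otimes> t))) = \<one>"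
  shows "c \<otimes> a = a \<otimes> c \<otimes> t"
proof -
  have ctc: "(c \<otimes> t) \<otimes> (t \<otimes> c) = \<one>"
  proof -
    have "(c \<otimes> t) \<otimes> (t \<otimes> c) = c \<otimes> (t \<otimes> t) \<otimes> c" using c0 by (simp add: m_assoc)
    then show ?thesis using tt cc c0 by simp
  qed
  have "c \<otimes> a = (a \<otimes> a) \<otimes> (c \<otimes> a) \<otimes> ((c \<otimes> t) \<otimes> (t \<otimes> c))"
    using aa ctc c0 by simp
  also have "\<dots> = a \<otimes> (a \<otimes> (c \<otimes> (a \<otimes> (c \<otimes> t)))) \<otimes> (t \<otimes> c)"
    using c0 by (simp add: m_assoc)
  also have "\<dots> = a \<otimes> (c \<otimes> t)" using e c0 tc by simp
  also have "\<dots> = a \<otimes> c \<otimes> t" using c0 by (simp add: m_assoc)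
  finally show ?thesis .
qed

locale pres =
  fixes H :: "('h,'m) monoid_scheme" and I :: "'h set"
  assumes grpH: "group H"
begin

sublocale Hg: group H by (rule grpH)
sublocale G: group "Gpres H I" by (rule group_Gpres[OF grpH])

definition "Aa = cls H I [(GA,False)]"
definition "Zz = cls H I [(GZ,False)]"
definition "Hm h = cls H I [(GH h,False)]"
definition "Cg g = Hm g \<otimes>\<^bsub>Gpres H I\<^esub> Aa \<otimes>\<^bsub>Gpres H I\<^esub> inv\<^bsub>Gpres H I\<^esub> (Hm g)"
definition "Zb b = (if b then Zz else \<one>\<^bsub>Gpres H I\<^esub>)"

lemma cls_carrier: "valid_word H w \<Longrightarrow> cls H I w \<in> carrier (Gpres H I)"
  by (auto simp: Gcarrier[OF grpH])

lemma Aa_c[simp]: "Aa \<in> carrier (Gpres H I)" by (simp add: Aa_def cls_carrier)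
lemma Zz_c[simp]: "Zz \<in> carrier (Gpres H I)" by (simp add: Zz_def cls_carrier)
lemma Hm_c[simp]: "h \<in> carrier H \<Longrightarrow> Hm h \<in> carrier (Gpres H I)" by (simp add: Hm_def cls_carrier)
lemma Cg_c[simp]: "h \<in> carrier H \<Longrightarrow> Cg h \<in> carrier (Gpres H I)" by (simp add: Cg_def)
lemma Zb_c[simp]: "Zb b \<in> carrier (Gpres H I)" by (simp add: Zb_def)

lemma cls_snoc: "valid_word H (w @ [l]) \<Longrightarrow> cls H I (w @ [l]) = cls H I w \<otimes>\<^bsub>Gpres H I\<^esub> cls H I [l]"
  by (simp add: Gmult[OF grpH])

lemma cls_Cons: "valid_word H (l # w) \<Longrightarrow> cls H I (l # w) = cls H I [l] \<otimes>\<^bsub>Gpres H I\<^esub> cls H I w"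
  using Gmult[OF grpH, of "[l]" w I] by simp

lemma cls_rel: "r \<in> relators H I \<Longrightarrow> cls H I r = \<one>\<^bsub>Gpres H I\<^esub>"
  using pres_eq.relator[where H=H and I=I and u="[]" and v="[]" and r=r]
  by (simp add: cls_eqI[OF grpH] Gone)

lemma cls_letter_inv: "x \<in> gens H \<Longrightarrow> cls H I [(x,True)] = inv\<^bsub>Gpres H I\<^esub> (cls H I [(x,False)])"
proof -
  assume x: "x \<in> gens H"
  have "cls H I [(x,True)] \<otimes>\<^bsub>Gpres H I\<^esub> cls H I [(x,False)] = \<one>\<^bsub>Gpres H I\<^esub>"
    using pres_eq.cancel[where H=H and I=I and u="[]" and v="[]" and x=x and b=True] x
    by (simp add: Gmult[OF grpH] cls_eqI[OF grpH] Gone)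
  then show ?thesis using x by (intro G.inv_equality[symmetric]) (auto simp: cls_carrier)
qed

lemma AA: "Aa \<otimes>\<^bsub>Gpres H I\<^esub> Aa = \<one>\<^bsub>Gpres H I\<^esub>"
  using cls_rel[of "[(GA,False),(GA,False)]"] by (simp add: Aa_def relators_def Gmult[OF grpH])

lemma ZZ: "Zz \<otimes>\<^bsub>Gpres H I\<^esub> Zz = \<one>\<^bsub>Gpres H I\<^esub>"
  using cls_rel[of "[(GZ,False),(GZ,False)]"] by (simp add: Zz_def relators_def Gmult[OF grpH])

lemma invA: "inv\<^bsub>Gpres H I\<^esub> Aa = Aa" using AA by (intro G.inv_equality) auto
lemma invZ: "inv\<^bsub>Gpres H I\<^esub> Zz = Zz" using ZZ by (intro G.inv_equality) auto

lemma Hm_mult: "g \<in> carrier H \<Longrightarrow> h \<in> carrier H \<Longrightarrow> Hm g \<otimes>\<^bsub>Gpres H I\<^esub> Hm h = Hm (g \<otimes>\<^bsub>H\<^esub> h)"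
proof -
  assume gh: "g \<in> carrier H" "h \<in> carrier H"
  have r: "[(GH g,False),(GH h,False),(GH (g \<otimes>\<^bsub>H\<^esub> h),True)] \<in> relators H I"
    using gh by (auto simp: relators_def)
  have "cls H I [(GH g,False),(GH h,False),(GH (g \<otimes>\<^bsub>H\<^esub> h),True)]
     = Hm g \<otimes>\<^bsub>Gpres H I\<^esub> Hm h \<otimes>\<^bsub>Gpres H I\<^esub> inv\<^bsub>Gpres H I\<^esub> (Hm (g \<otimes>\<^bsub>H\<^esub> h))"
    using gh by (simp add: Gmult[OF grpH] Hm_def cls_letter_inv[symmetric])
  then have "Hm g \<otimes>\<^bsub>Gpres H I\<^esub> Hm h \<otimes>\<^bsub>Gpres H I\<^esub> inv\<^bsub>Gpres H I\<^esub> (Hm (g \<otimes>\<^bsub>H\<^esub> h)) = \<one>\<^bsub>Gpres H I\<^esub>"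
    using cls_rel[OF r] by simp
  then show ?thesis using gh
    by (metis G.inv_closed G.inv_equality G.inv_inv G.m_closed Hg.m_closed Hm_c)
qed


lemma Hm_one: "Hm \<one>\<^bsub>H\<^esub> = \<one>\<^bsub>Gpres H I\<^esub>"
  using Hm_mult[of "\<one>\<^bsub>H\<^esub>" "\<one>\<^bsub>H\<^esub>"] by simp

lemma Hm_inv: "h \<in> carrier H \<Longrightarrow> Hm (inv\<^bsub>H\<^esub> h) = inv\<^bsub>Gpres H I\<^esub> (Hm h)"
  using Hm_mult[of "inv\<^bsub>H\<^esub> h" h] Hm_one by (intro G.inv_equality[symmetric]) auto

lemma Z_letter: "x \<in> gens H \<Longrightarrow> Zz \<otimes>\<^bsub>Gpres H I\<^esub> cls H I [(x,False)] = cls H I [(x,False)] \<otimes>\<^bsub>Gpres H I\<^esub> Zz"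
proof -
  assume x: "x \<in> gens H"
  have r: "[(GZ,False),(x,False),(GZ,True),(x,True)] \<in> relators H I" using x by (auto simp: relators_def)
  have "cls H I [(GZ,False),(x,False),(GZ,True),(x,True)] =
     Zz \<otimes>\<^bsub>Gpres H I\<^esub> cls H I [(x,False)] \<otimes>\<^bsub>Gpres H I\<^esub> inv\<^bsub>Gpres H I\<^esub> Zz \<otimes>\<^bsub>Gpres H I\<^esub> inv\<^bsub>Gpres H I\<^esub> (cls H I [(x,False)])"
    using x by (simp add: Gmult[OF grpH] Zz_def cls_letter_inv[symmetric])
  then show ?thesis using cls_rel[OF r] x by (intro G.comm_from) (auto simp: cls_carrier)
qed

lemma Z_letter': "fst l \<in> gens H \<Longrightarrow> Zz \<otimes>\<^bsub>Gpres H I\<^esub> cls H I [l] = cls H I [l] \<otimes>\<^bsub>Gpres H I\<^esub> Zz"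
proof -
  assume l: "fst l \<in> gens H"
  obtain x b where lx: "l = (x,b)" by force
  show ?thesis
  proof (cases b)
    case False then show ?thesis using Z_letter l lx by simp
  next
    case True
    have "Zz \<otimes>\<^bsub>Gpres H I\<^esub> cls H I [(x,False)] = cls H I [(x,False)] \<otimes>\<^bsub>Gpres H I\<^esub> Zz"
      using Z_letter l lx by simp
    then have "inv\<^bsub>Gpres H I\<^esub> (cls H I [(x,False)]) \<otimes>\<^bsub>Gpres H I\<^esub> Zz = Zz \<otimes>\<^bsub>Gpres H I\<^esub> inv\<^bsub>Gpres H I\<^esub> (cls H I [(x,False)])"
      using l lx by (intro G.commutes_inv) (auto simp: cls_carrier)
    then show ?thesis using True lx l cls_letter_inv by simp
  qed
qed


lemma cls_GA[simp]: "cls H I [(GA,b)] = Aa"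
proof (cases b)
  case True then show ?thesis using cls_letter_inv[of GA] invA by (simp add: Aa_def)
qed (simp add: Aa_def)
lemma cls_GZ[simp]: "cls H I [(GZ,b)] = Zz"
proof (cases b)
  case True then show ?thesis using cls_letter_inv[of GZ] invZ by (simp add: Zz_def)
qed (simp add: Zz_def)
lemma cls_GH[simp]: "h \<in> carrier H \<Longrightarrow> cls H I [(GH h,False)] = Hm h"
  "h \<in> carrier H \<Longrightarrow> cls H I [(GH h,True)] = inv\<^bsub>Gpres H I\<^esub> (Hm h)"
  by (simp_all add: Hm_def cls_letter_inv)

lemma cls_list: "valid_word H w \<Longrightarrow> cls H I w = foldr (\<lambda>l acc. cls H I [l] \<otimes>\<^bsub>Gpres H I\<^esub> acc) w \<one>\<^bsub>Gpres H I\<^esub>"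
proof (induction w)
  case Nil then show ?case by (simp add: Gone)
next
  case (Cons l w) then show ?case using cls_Cons[OF Cons.prems] by simp
qed

lemma carrier_cls: "y \<in> carrier (Gpres H I) \<Longrightarrow> \<exists>w. valid_word H w \<and> y = cls H I w"
  by (auto simp: Gcarrier[OF grpH])

lemma Z_central_w: "valid_word H w \<Longrightarrow> Zz \<otimes>\<^bsub>Gpres H I\<^esub> cls H I w = cls H I w \<otimes>\<^bsub>Gpres H I\<^esub> Zz"
proof (induction w rule: rev_induct)
  case Nil then show ?case by (simp add: Gone[symmetric])
next
  case (snoc l w)
  have vw: "valid_word H w" and vl: "fst l \<in> gens H" using snoc.prems by auto
  have cw: "cls H I w \<in> carrier (Gpres H I)" and cl: "cls H I [l] \<in> carrier (Gpres H I)"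
    using vw vl by (auto simp: cls_carrier)
  have "Zz \<otimes>\<^bsub>Gpres H I\<^esub> cls H I (w @ [l]) = (Zz \<otimes>\<^bsub>Gpres H I\<^esub> cls H I w) \<otimes>\<^bsub>Gpres H I\<^esub> cls H I [l]"
    using cls_snoc[OF snoc.prems] cw cl by (simp add: G.m_assoc)
  also have "\<dots> = cls H I w \<otimes>\<^bsub>Gpres H I\<^esub> (Zz \<otimes>\<^bsub>Gpres H I\<^esub> cls H I [l])"
    using snoc.IH[OF vw] cw cl by (simp add: G.m_assoc)
  also have "\<dots> = cls H I (w @ [l]) \<otimes>\<^bsub>Gpres H I\<^esub> Zz"
    using cls_snoc[OF snoc.prems] cw cl Z_letter'[OF vl] by (simp add: G.m_assoc)
  finally show ?case .
qed

lemma Z_central: "y \<in> carrier (Gpres H I) \<Longrightarrow> Zz \<otimes>\<^bsub>Gpres H I\<^esub> y = y \<otimes>\<^bsub>Gpres H I\<^esub> Zz"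
  using carrier_cls Z_central_w by blast

lemma Zb_central: "y \<in> carrier (Gpres H I) \<Longrightarrow> Zb b \<otimes>\<^bsub>Gpres H I\<^esub> y = y \<otimes>\<^bsub>Gpres H I\<^esub> Zb b"
  using Z_central by (simp add: Zb_def)

lemma Zb_False[simp]: "Zb False = \<one>\<^bsub>Gpres H I\<^esub>" by (simp add: Zb_def)

lemma Zb_mult: "Zb a \<otimes>\<^bsub>Gpres H I\<^esub> Zb b = Zb (a \<noteq> b)"
  using ZZ by (simp add: Zb_def)

lemma CgCg: "g \<in> carrier H \<Longrightarrow> Cg g \<otimes>\<^bsub>Gpres H I\<^esub> Cg g = \<one>\<^bsub>Gpres H I\<^esub>"
proof -
  assume g: "g \<in> carrier H"
  have "Cg g \<otimes>\<^bsub>Gpres H I\<^esub> Cg g = Hm g \<otimes>\<^bsub>Gpres H I\<^esub> (Aa \<otimes>\<^bsub>Gpres H I\<^esub> Aa) \<otimes>\<^bsub>Gpres H I\<^esub> inv\<^bsub>Gpres H I\<^esub> (Hm g)"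
    using g by (simp add: Cg_def G.m_assoc G.cancel_left2)
  then show ?thesis using g AA by (simp add: G.r_inv)
qed

lemma Cg_Hm: "g \<in> carrier H \<Longrightarrow> h \<in> carrier H \<Longrightarrow>
  Cg g \<otimes>\<^bsub>Gpres H I\<^esub> Hm h = Hm h \<otimes>\<^bsub>Gpres H I\<^esub> Cg (inv\<^bsub>H\<^esub> h \<otimes>\<^bsub>H\<^esub> g)"
proof -
  assume g: "g \<in> carrier H" and h: "h \<in> carrier H"
  have e: "Hm (inv\<^bsub>H\<^esub> h \<otimes>\<^bsub>H\<^esub> g) = inv\<^bsub>Gpres H I\<^esub> (Hm h) \<otimes>\<^bsub>Gpres H I\<^esub> Hm g"
    using g h Hm_mult[of "inv\<^bsub>H\<^esub> h" g] Hm_inv by simp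
  show ?thesis
    using g h unfolding Cg_def e
    by (simp add: G.m_assoc G.inv_mult_group G.cancel_left1)
qed


lemma Cg_A: "h \<in> carrier H \<Longrightarrow> Cg h \<otimes>\<^bsub>Gpres H I\<^esub> Aa = Aa \<otimes>\<^bsub>Gpres H I\<^esub> Cg h \<otimes>\<^bsub>Gpres H I\<^esub> Zb (h \<in> I)"
proof -
  assume h: "h \<in> carrier H"
  define r where "r = comm_word h @ (if h \<in> I then [(GZ,True)] else [])"
  have rr: "r \<in> relators H I" using h by (auto simp: relators_def r_def)
  have v: "valid_word H r" using h by (simp add: r_def comm_word_def)
  have "cls H I r = Aa \<otimes>\<^bsub>Gpres H I\<^esub> (Cg h \<otimes>\<^bsub>Gpres H I\<^esub> (Aa \<otimes>\<^bsub>Gpres H I\<^esub> (Cg h \<otimes>\<^bsub>Gpres H I\<^esub> Zb (h \<in> I))))"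
    unfolding cls_list[OF v] using h
    by (cases "h \<in> I") (simp_all add: r_def comm_word_def Cg_def Zb_def G.m_assoc)
  then have e: "Aa \<otimes>\<^bsub>Gpres H I\<^esub> (Cg h \<otimes>\<^bsub>Gpres H I\<^esub> (Aa \<otimes>\<^bsub>Gpres H I\<^esub> (Cg h \<otimes>\<^bsub>Gpres H I\<^esub> Zb (h \<in> I)))) = \<one>\<^bsub>Gpres H I\<^esub>"
    using cls_rel[OF rr] by simp
  show ?thesis
    using h by (intro G.swap_lemma[OF _ _ _ AA CgCg[OF h] _ _ e]) (auto simp: Zb_mult Zb_central)
qed

lemma Cg_letter: "fst l \<in> gens H \<Longrightarrow> g \<in> carrier H \<Longrightarrow>
  Cg g \<otimes>\<^bsub>Gpres H I\<^esub> cls H I [l] = cls H I [l] \<otimes>\<^bsub>Gpres H I\<^esub> Cg (inv\<^bsub>H\<^esub> (letter_val H l) \<otimes>\<^bsub>H\<^esub> g)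
     \<otimes>\<^bsub>Gpres H I\<^esub> Zb (fst l = GA \<and> g \<in> I)"
proof -
  assume l: "fst l \<in> gens H" and g: "g \<in> carrier H"
  obtain x b where lx: "l = (x,b)" by force
  show ?thesis
  proof (cases x)
    case (GH h)
    have h: "h \<in> carrier H" using l lx GH by simp
    show ?thesis
    proof (cases b)
      case False
      then show ?thesis using lx GH h g Cg_Hm by (simp add: Zb_def)
    next
      case True
      have "Cg g \<otimes>\<^bsub>Gpres H I\<^esub> Hm (inv\<^bsub>H\<^esub> h) = Hm (inv\<^bsub>H\<^esub> h) \<otimes>\<^bsub>Gpres H I\<^esub> Cg (inv\<^bsub>H\<^esub> (inv\<^bsub>H\<^esub> h) \<otimes>\<^bsub>H\<^esub> g)"
        using Cg_Hm h g by simp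
      then show ?thesis using lx GH h g True by (simp add: Zb_def Hm_inv)
    qed
  next
    case GA
    then show ?thesis using lx g Cg_A by simp
  next
    case GZ
    then show ?thesis using lx g Z_central[of "Cg g"] by (simp add: Zb_def)
  qed
qed


definition cntw where "cntw Q w = odd (card {i. i < length w \<and> fst (w ! i) = GA \<and> Q (word_pi H (take i w))})"

lemma cntw_Nil[simp]: "cntw Q [] = False" by (simp add: cntw_def)

lemma cntw_snoc: "cntw Q (w @ [l]) = (cntw Q w \<noteq> (fst l = GA \<and> Q (word_pi H w)))"
proof -
  have key: "{i. i < length (w @ [l]) \<and> fst ((w @ [l]) ! i) = GA \<and> Q (word_pi H (take i (w @ [l])))}
     = {i. i < length w \<and> fst (w ! i) = GA \<and> Q (word_pi H (take i w))}
       \<union> (if fst l = GA \<and> Q (word_pi H w) then {length w} else {})"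
    by (auto simp: nth_append less_Suc_eq)
  have fin: "finite {i. i < length w \<and> fst (w ! i) = GA \<and> Q (word_pi H (take i w))}" by simp
  show ?thesis unfolding cntw_def key using fin by (auto simp: card_insert_if)
qed

lemma cntw_supp: "valid_word H w \<Longrightarrow> cntw Q w = odd (card {p \<in> word_supp H w. Q p})"
proof (induction w rule: rev_induct)
  case Nil then show ?case by simp
next
  case (snoc l w)
  have vw: "valid_word H w" using snoc.prems by simp
  have f: "finite (word_supp H w)" using word_supp_finite[OF grpH vw] .
  show ?case
  proof (cases "fst l = GA")
    case True
    have "{p \<in> word_supp H (w @ [l]). Q p} = sd {p \<in> word_supp H w. Q p} {p \<in> {word_pi H w}. Q p}"
      using word_supp_snoc[OF grpH snoc.prems] True by (simp add: sd_filter)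
    moreover have "odd (card {p \<in> {word_pi H w}. Q p}) = Q (word_pi H w)"
    proof -
      have "{p \<in> {word_pi H w}. Q p} = (if Q (word_pi H w) then {word_pi H w} else {})" by auto
      then show ?thesis by simp
    qed
    ultimately show ?thesis
      using True snoc.IH[OF vw] f by (simp add: cntw_snoc odd_card_sd)
  next
    case False
    then show ?thesis using word_supp_snoc[OF grpH snoc.prems] snoc.IH[OF vw] by (simp add: cntw_snoc)
  qed
qed

lemma Cg_word: "valid_word H w \<Longrightarrow> g \<in> carrier H \<Longrightarrow>
  Cg g \<otimes>\<^bsub>Gpres H I\<^esub> cls H I w = cls H I w \<otimes>\<^bsub>Gpres H I\<^esub> Cg (inv\<^bsub>H\<^esub> (word_pi H w) \<otimes>\<^bsub>H\<^esub> g)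
     \<otimes>\<^bsub>Gpres H I\<^esub> Zb (cntw (\<lambda>p. inv\<^bsub>H\<^esub> p \<otimes>\<^bsub>H\<^esub> g \<in> I) w)"
proof (induction w rule: rev_induct)
  case Nil then show ?case by (simp add: Gone[symmetric])
next
  case (snoc l w)
  have vw: "valid_word H w" and vl: "fst l \<in> gens H" and g: "g \<in> carrier H" using snoc.prems by auto
  define g' where "g' = inv\<^bsub>H\<^esub> (word_pi H w) \<otimes>\<^bsub>H\<^esub> g"
  define n where "n = cntw (\<lambda>p. inv\<^bsub>H\<^esub> p \<otimes>\<^bsub>H\<^esub> g \<in> I) w"
  define lv where "lv = letter_val H l"
  define d where "d = (fst l = GA \<and> g' \<in> I)"
  have pw: "word_pi H w \<in> carrier H" using word_pi_closed[OF grpH vw] .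
  have lvc: "lv \<in> carrier H" using letter_val_closed[OF grpH vl] by (simp add: lv_def)
  have g'c: "g' \<in> carrier H" using pw g by (simp add: g'_def)
  have cw: "cls H I w \<in> carrier (Gpres H I)" and cl: "cls H I [l] \<in> carrier (Gpres H I)"
    using vw vl by (auto simp: cls_carrier)
  have IH: "Cg g \<otimes>\<^bsub>Gpres H I\<^esub> cls H I w = cls H I w \<otimes>\<^bsub>Gpres H I\<^esub> Cg g' \<otimes>\<^bsub>Gpres H I\<^esub> Zb n"
    using snoc.IH[OF vw g] by (simp add: g'_def n_def)
  have L: "Cg g' \<otimes>\<^bsub>Gpres H I\<^esub> cls H I [l] = cls H I [l] \<otimes>\<^bsub>Gpres H I\<^esub> Cg (inv\<^bsub>H\<^esub> lv \<otimes>\<^bsub>H\<^esub> g') \<otimes>\<^bsub>Gpres H I\<^esub> Zb d"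
    using Cg_letter[OF vl g'c] by (simp add: lv_def d_def)
  have pi: "inv\<^bsub>H\<^esub> (word_pi H (w @ [l])) \<otimes>\<^bsub>H\<^esub> g = inv\<^bsub>H\<^esub> lv \<otimes>\<^bsub>H\<^esub> g'"
    using word_pi_snoc[OF grpH snoc.prems(1)] pw lvc g
    by (simp add: lv_def g'_def Hg.inv_mult_group Hg.m_assoc)
  have cn: "cntw (\<lambda>p. inv\<^bsub>H\<^esub> p \<otimes>\<^bsub>H\<^esub> g \<in> I) (w @ [l]) = (n \<noteq> d)"
    by (simp add: cntw_snoc n_def d_def g'_def)
  have c2: "Cg (inv\<^bsub>H\<^esub> lv \<otimes>\<^bsub>H\<^esub> g') \<in> carrier (Gpres H I)" using lvc g'c by simp
  have "Cg g \<otimes>\<^bsub>Gpres H I\<^esub> cls H I (w @ [l]) = (Cg g \<otimes>\<^bsub>Gpres H I\<^esub> cls H I w) \<otimes>\<^bsub>Gpres H I\<^esub> cls H I [l]"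
    using cls_snoc[OF snoc.prems(1)] cw cl g by (simp add: G.m_assoc)
  also have "\<dots> = cls H I w \<otimes>\<^bsub>Gpres H I\<^esub> (Cg g' \<otimes>\<^bsub>Gpres H I\<^esub> (Zb n \<otimes>\<^bsub>Gpres H I\<^esub> cls H I [l]))"
    unfolding IH using cw cl g'c by (simp add: G.m_assoc)
  also have "\<dots> = cls H I w \<otimes>\<^bsub>Gpres H I\<^esub> ((Cg g' \<otimes>\<^bsub>Gpres H I\<^esub> cls H I [l]) \<otimes>\<^bsub>Gpres H I\<^esub> Zb n)"
    using cw cl g'c Zb_central[OF cl, of n] by (simp add: G.m_assoc)
  also have "\<dots> = cls H I (w @ [l]) \<otimes>\<^bsub>Gpres H I\<^esub> Cg (inv\<^bsub>H\<^esub> lv \<otimes>\<^bsub>H\<^esub> g') \<otimes>\<^bsub>Gpres H I\<^esub> (Zb d \<otimes>\<^bsub>Gpres H I\<^esub> Zb n)"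
    unfolding L cls_snoc[OF snoc.prems(1)] using cw cl c2 by (simp add: G.m_assoc)
  also have "\<dots> = cls H I (w @ [l]) \<otimes>\<^bsub>Gpres H I\<^esub> Cg (inv\<^bsub>H\<^esub> (word_pi H (w @ [l])) \<otimes>\<^bsub>H\<^esub> g)
     \<otimes>\<^bsub>Gpres H I\<^esub> Zb (cntw (\<lambda>p. inv\<^bsub>H\<^esub> p \<otimes>\<^bsub>H\<^esub> g \<in> I) (w @ [l]))"
    unfolding pi cn Zb_mult by (cases n; cases d) auto
  finally show ?case .
qed

end

lemma exists_lt: "\<exists>lt::'a \<Rightarrow> 'a \<Rightarrow> bool. \<forall>g h. g \<noteq> h \<longrightarrow> (lt g h \<longleftrightarrow> \<not> lt h g)"
proof -
  have "\<exists>r::'a rel. Well_order r \<and> Field r = UNIV" by (rule well_ordering)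
  then obtain r :: "'a rel" where r1: "Well_order r" and r2: "Field r = UNIV" by (elim exE conjE)
  have lo: "linear_order_on UNIV r" using r1 r2 unfolding well_order_on_def by simp
  then have t: "total_on UNIV r" unfolding linear_order_on_def by simp
  have a: "antisym r" using lo unfolding linear_order_on_def partial_order_on_def by simp
  have "\<forall>g h. g \<noteq> h \<longrightarrow> (((g,h) \<in> r) \<longleftrightarrow> \<not> ((h,g) \<in> r))"
  proof (intro allI impI)
    fix g h :: 'a assume gh: "g \<noteq> h"
    have "(g,h) \<in> r \<or> (h,g) \<in> r" using t gh unfolding total_on_def by simp
    moreover have "\<not> ((g,h) \<in> r \<and> (h,g) \<in> r)" using a gh unfolding antisym_def by blast
    ultimately show "((g,h) \<in> r) \<longleftrightarrow> \<not> ((h,g) \<in> r)" by blast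
  qed
  then show ?thesis by (rule exI[of _ "\<lambda>g h. (g,h) \<in> r"])
qed

lemma torsion_fix:
  assumes grpH: "group H" and tf: "torsion_free H"
    and S: "S \<subseteq> carrier H" "finite S" "S \<noteq> {}" and k: "k \<in> carrier H" and e: "tr H k S = S"
  shows "k = \<one>\<^bsub>H\<^esub>"
proof -
  interpret Hg: group H by (rule grpH)
  obtain s where s: "s \<in> S" using S by blast
  define f where "f n = k [^]\<^bsub>H\<^esub> (n::nat) \<otimes>\<^bsub>H\<^esub> s" for n
  have sc: "s \<in> carrier H" using s S by auto
  have fS: "f n \<in> S" for n
  proof (induction n)
    case 0 then show ?case using s sc by (simp add: f_def)
  next
    case (Suc n)
    have ps: "k [^]\<^bsub>H\<^esub> Suc n = k \<otimes>\<^bsub>H\<^esub> k [^]\<^bsub>H\<^esub> n" by (rule Hg.nat_pow_Suc2[OF k])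
    have "f (Suc n) = (k \<otimes>\<^bsub>H\<^esub> k [^]\<^bsub>H\<^esub> n) \<otimes>\<^bsub>H\<^esub> s" by (simp only: f_def ps)
    also have "\<dots> = k \<otimes>\<^bsub>H\<^esub> f n" using k sc by (simp add: f_def Hg.m_assoc)
    finally have "f (Suc n) = k \<otimes>\<^bsub>H\<^esub> f n" .
    moreover have "k \<otimes>\<^bsub>H\<^esub> f n \<in> tr H k S" using Suc by (simp add: tr_def)
    ultimately show ?case using e by simp
  qed
  have "\<not> inj f"
  proof
    assume "inj f"
    moreover have "finite (range f)" using fS S(2) by (meson finite_subset image_subset_iff)
    ultimately have "finite (UNIV :: nat set)" using finite_imageD by blast
    then show False by simp
  qed
  then obtain m n where mn: "f m = f n" "m \<noteq> n" by (auto simp: inj_def)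
  have "\<exists>a b. a < b \<and> f a = f b" using mn by (metis linorder_neqE_nat)
  then obtain a b where ab: "a < b" "f a = f b" by blast
  define d where "d = b - a"
  have d0: "d > 0" using ab by (simp add: d_def)
  have "k [^]\<^bsub>H\<^esub> a \<otimes>\<^bsub>H\<^esub> (k [^]\<^bsub>H\<^esub> d \<otimes>\<^bsub>H\<^esub> s) = (k [^]\<^bsub>H\<^esub> a \<otimes>\<^bsub>H\<^esub> k [^]\<^bsub>H\<^esub> d) \<otimes>\<^bsub>H\<^esub> s"
    using k sc by (simp add: Hg.m_assoc)
  also have "\<dots> = k [^]\<^bsub>H\<^esub> b \<otimes>\<^bsub>H\<^esub> s" using k ab(1) by (simp add: Hg.nat_pow_mult d_def)
  also have "\<dots> = k [^]\<^bsub>H\<^esub> a \<otimes>\<^bsub>H\<^esub> s" using ab(2) by (simp add: f_def)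
  finally have "k [^]\<^bsub>H\<^esub> a \<otimes>\<^bsub>H\<^esub> s = k [^]\<^bsub>H\<^esub> a \<otimes>\<^bsub>H\<^esub> (k [^]\<^bsub>H\<^esub> d \<otimes>\<^bsub>H\<^esub> s)" by simp
  then have "s = k [^]\<^bsub>H\<^esub> d \<otimes>\<^bsub>H\<^esub> s" using k sc linj[OF grpH] by simp
  then have "k [^]\<^bsub>H\<^esub> d = \<one>\<^bsub>H\<^esub>" using k sc by simp
  then show ?thesis using tf k d0 by (simp add: torsion_free_def)
qed

lemma pair_parity:
  assumes grpH: "group H" and one_notin: "\<one>\<^bsub>H\<^esub> \<notin> I"
    and I_inv: "\<And>h. h \<in> I \<Longrightarrow> inv\<^bsub>H\<^esub> h \<in> I"
    and lt_tot: "\<And>g h. g \<noteq> h \<Longrightarrow> lt g h \<longleftrightarrow> \<not> lt h g"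
    and A: "A \<subseteq> carrier H" "finite A" and B: "B \<subseteq> carrier H" "finite B"
  shows "(beta2 H I lt A B \<noteq> beta2 H I lt B A) = odd (card {(g,p). g \<in> A \<and> p \<in> B \<and> inv\<^bsub>H\<^esub> g \<otimes>\<^bsub>H\<^esub> p \<in> I})"
proof -
  interpret Hg: group H by (rule grpH)
  have iv: "g \<in> carrier H \<Longrightarrow> p \<in> carrier H \<Longrightarrow> inv\<^bsub>H\<^esub> p \<otimes>\<^bsub>H\<^esub> g \<in> I \<longleftrightarrow> inv\<^bsub>H\<^esub> g \<otimes>\<^bsub>H\<^esub> p \<in> I" for g p
  proof -
    assume c: "g \<in> carrier H" "p \<in> carrier H"
    have "inv\<^bsub>H\<^esub> (inv\<^bsub>H\<^esub> p \<otimes>\<^bsub>H\<^esub> g) = inv\<^bsub>H\<^esub> g \<otimes>\<^bsub>H\<^esub> p"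
      "inv\<^bsub>H\<^esub> (inv\<^bsub>H\<^esub> g \<otimes>\<^bsub>H\<^esub> p) = inv\<^bsub>H\<^esub> p \<otimes>\<^bsub>H\<^esub> g"
      using c by (simp_all add: Hg.inv_mult_group)
    then show ?thesis using I_inv by metis
  qed
  define R where "R = {(g,p). g \<in> A \<and> p \<in> B \<and> inv\<^bsub>H\<^esub> g \<otimes>\<^bsub>H\<^esub> p \<in> I}"
  define R1 where "R1 = {(g,p). g \<in> A \<and> p \<in> B \<and> lt p g \<and> inv\<^bsub>H\<^esub> g \<otimes>\<^bsub>H\<^esub> p \<in> I}"
  define R2 where "R2 = {(g,p). g \<in> A \<and> p \<in> B \<and> lt g p \<and> inv\<^bsub>H\<^esub> g \<otimes>\<^bsub>H\<^esub> p \<in> I}"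
  define R3 where "R3 = {(g,p). g \<in> B \<and> p \<in> A \<and> lt p g \<and> inv\<^bsub>H\<^esub> g \<otimes>\<^bsub>H\<^esub> p \<in> I}"
  have neq: "(g,p) \<in> R \<Longrightarrow> g \<noteq> p" for g p using one_notin A(1) by (auto simp: R_def)
  have RU: "R = R1 \<union> R2" using neq lt_tot by (auto simp: R_def R1_def R2_def)
  have Rd: "R1 \<inter> R2 = {}"
  proof (rule ccontr)
    assume "R1 \<inter> R2 \<noteq> {}"
    then obtain g p where gp: "(g,p) \<in> R1" "(g,p) \<in> R2" by auto
    then have "(g,p) \<in> R" by (auto simp: R_def R1_def)
    then have "g \<noteq> p" by (rule neq)
    then show False using gp lt_tot[of g p] by (auto simp: R1_def R2_def)
  qed
  have fin: "finite R1" "finite R2"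
  proof -
    have "R1 \<subseteq> A \<times> B" "R2 \<subseteq> A \<times> B" by (auto simp: R1_def R2_def)
    then show "finite R1" "finite R2" using A B by (meson finite_SigmaI finite_subset)+
  qed
  have R23: "R3 = (\<lambda>(g,p). (p,g)) ` R2"
    using A B iv by (auto simp: R2_def R3_def subset_eq image_iff)
  have "card R3 = card R2" unfolding R23 by (rule card_image) (auto simp: inj_on_def)
  moreover have "card R = card R1 + card R2" unfolding RU using card_Un_disjoint[OF fin Rd] .
  moreover have "beta2 H I lt A B = odd (card R1)" "beta2 H I lt B A = odd (card R3)"
    by (simp_all add: beta2_def R1_def R3_def)
  ultimately show ?thesis by (simp add: R_def[symmetric])
qed

lemma odd_sigma:
  assumes "finite A" "\<And>a. a \<in> A \<Longrightarrow> finite (F a)" "odd (card (Sigma A F))"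
  shows "\<exists>a\<in>A. odd (card (F a))"
proof (rule ccontr)
  assume "\<not> ?thesis"
  then have "\<forall>a\<in>A. even (card (F a))" by blast
  then have "even (\<Sum>a\<in>A. card (F a))" by (simp add: dvd_sum)
  then show False using assms card_SigmaI by metis
qed


lemma card_tr_I:
  assumes grpH: "group H" and g: "g \<in> carrier H" and S: "S \<subseteq> carrier H"
  shows "card ((\<lambda>s. inv\<^bsub>H\<^esub> g \<otimes>\<^bsub>H\<^esub> s) ` S \<inter> I) = card {p \<in> S. inv\<^bsub>H\<^esub> g \<otimes>\<^bsub>H\<^esub> p \<in> I}"
proof -
  interpret Hg: group H by (rule grpH)
  have "(\<lambda>s. inv\<^bsub>H\<^esub> g \<otimes>\<^bsub>H\<^esub> s) ` S \<inter> I = (\<lambda>s. inv\<^bsub>H\<^esub> g \<otimes>\<^bsub>H\<^esub> s) ` {p \<in> S. inv\<^bsub>H\<^esub> g \<otimes>\<^bsub>H\<^esub> p \<in> I}"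
    by auto
  moreover have "inj_on (\<lambda>s. inv\<^bsub>H\<^esub> g \<otimes>\<^bsub>H\<^esub> s) {p \<in> S. inv\<^bsub>H\<^esub> g \<otimes>\<^bsub>H\<^esub> p \<in> I}"
    using S g linj[OF grpH, of "inv\<^bsub>H\<^esub> g"] by (auto simp: inj_on_def subset_eq)
  ultimately show ?thesis by (simp add: card_image)
qed

lemma sd_empty_eq: "sd A B = {} \<Longrightarrow> A = B" by (auto simp: sd_def)

theorem mainTheorem2:
  fixes H :: "('h, 'm) monoid_scheme" and I :: "'h set" and x :: "'h word set"
  assumes "group H" and "torsion_free H"
    and "I \<subseteq> carrier H" and "\<one>\<^bsub>H\<^esub> \<notin> I" and "(\<lambda>h. inv\<^bsub>H\<^esub> h) ` I = I"
    and "x \<in> Npres H I"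
  shows "(\<exists>c \<in> carrier (Gpres H I).
            c \<otimes>\<^bsub>Gpres H I\<^esub> x \<otimes>\<^bsub>Gpres H I\<^esub> inv\<^bsub>Gpres H I\<^esub> c
              = x \<otimes>\<^bsub>Gpres H I\<^esub> zG H I)
         \<longleftrightarrow> (\<exists>g \<in> carrier H.
                odd (card ((\<lambda>s. inv\<^bsub>H\<^esub> g \<otimes>\<^bsub>H\<^esub> s) ` supp H x \<inter> I)))"
proof -
  note grpH = assms(1) and tf = assms(2) and one_notin = assms(4)
  interpret pres H I by (rule pres.intro[OF grpH])
  have I_inv: "\<And>h. h \<in> I \<Longrightarrow> inv\<^bsub>H\<^esub> h \<in> I"
  proof -
    fix h assume "h \<in> I"
    then have "inv\<^bsub>H\<^esub> h \<in> (\<lambda>h. inv\<^bsub>H\<^esub> h) ` I" by (rule imageI)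
    then show "inv\<^bsub>H\<^esub> h \<in> I" unfolding assms(5) .
  qed
  have "\<exists>lt::'h \<Rightarrow> 'h \<Rightarrow> bool. \<forall>g h. g \<noteq> h \<longrightarrow> (lt g h \<longleftrightarrow> \<not> lt h g)" by (rule exists_lt)
  then obtain lt :: "'h \<Rightarrow> 'h \<Rightarrow> bool" where lt_all: "\<forall>g h. g \<noteq> h \<longrightarrow> (lt g h \<longleftrightarrow> \<not> lt h g)"
    by (rule exE)
  have lt_tot: "\<And>g h. g \<noteq> h \<Longrightarrow> lt g h \<longleftrightarrow> \<not> lt h g"
  proof -
    fix g h :: 'h assume gh: "g \<noteq> h"
    show "lt g h \<longleftrightarrow> \<not> lt h g" by (rule mp[OF spec[OF spec[OF lt_all, of g], of h] gh])
  qed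
  have xc: "x \<in> carrier (Gpres H I)" and px: "piG H x = \<one>\<^bsub>H\<^esub>" using assms(6) by (auto simp: Npres_def)
  obtain w0 where v0: "valid_word H w0" and x0: "x = cls H I w0" using xc carrier_cls by blast
  define wx where "wx = rep x"
  have vx: "valid_word H wx" using valid_rep[OF grpH v0] by (simp add: wx_def x0)
  have xeq: "cls H I wx = x" using cls_rep[OF grpH v0] by (simp add: wx_def x0)
  have pix: "word_pi H wx = \<one>\<^bsub>H\<^esub>" using px by (simp add: piG_def wx_def)
  define Sx where "Sx = word_supp H wx"
  have Sxe: "supp H x = Sx" by (simp add: supp_def Sx_def wx_def)
  have Sxc: "Sx \<subseteq> carrier H" "finite Sx"
    using word_supp_sub[OF grpH] word_supp_finite[OF grpH vx] by (auto simp: Sx_def)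
  have RP0: "\<And>w w' s. pres_eq H I w w' \<Longrightarrow> good H s \<Longrightarrow> run H I lt w s = run H I lt w' s"
    apply (rule run_pres_eq[where H=H and I=I and lt=lt])
         apply (rule grpH) apply (rule one_notin) apply (erule I_inv) apply (erule lt_tot)
     apply assumption+ done
  have EI: "\<And>w k. valid_word H w \<Longrightarrow> k \<in> carrier H \<Longrightarrow> word_supp H w = {} \<Longrightarrow>
      Ew H I lt w k = Ew H I lt w \<one>\<^bsub>H\<^esub>"
    apply (rule Ew_invariant[where H=H and I=I and lt=lt])
         apply (rule grpH) apply (rule one_notin) apply (erule I_inv) apply (erule lt_tot)
      apply assumption+ done
  have PP: "\<And>A B. A \<subseteq> carrier H \<Longrightarrow> finite A \<Longrightarrow> B \<subseteq> carrier H \<Longrightarrow> finite B \<Longrightarrow>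
      (beta2 H I lt A B \<noteq> beta2 H I lt B A) = odd (card {(g,p). g \<in> A \<and> p \<in> B \<and> inv\<^bsub>H\<^esub> g \<otimes>\<^bsub>H\<^esub> p \<in> I})"
    apply (rule pair_parity[where H=H and I=I and lt=lt])
         apply (rule grpH) apply (rule one_notin) apply (erule I_inv) apply (erule lt_tot)
        apply assumption+ done
  have zG: "zG H I = Zz" unfolding zG_def by (rule cls_GZ)
  show ?thesis
  proof
    assume "\<exists>c \<in> carrier (Gpres H I). c \<otimes>\<^bsub>Gpres H I\<^esub> x \<otimes>\<^bsub>Gpres H I\<^esub> inv\<^bsub>Gpres H I\<^esub> c
              = x \<otimes>\<^bsub>Gpres H I\<^esub> zG H I"
    then obtain c where cc: "c \<in> carrier (Gpres H I)"
      and ce: "c \<otimes>\<^bsub>Gpres H I\<^esub> x \<otimes>\<^bsub>Gpres H I\<^esub> inv\<^bsub>Gpres H I\<^esub> c = x \<otimes>\<^bsub>Gpres H I\<^esub> zG H I" by blast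
    obtain wc where vc: "valid_word H wc" and c0: "c = cls H I wc" using cc carrier_cls by blast
    obtain wd where vd: "valid_word H wd" and d0: "inv\<^bsub>Gpres H I\<^esub> c = cls H I wd"
      using G.inv_closed[OF cc] carrier_cls by blast
    have e1: "cls H I (wc @ wx @ wd) = cls H I (wx @ [(GZ,False)])"
      using ce[unfolded d0] unfolding c0 zG_def xeq[symmetric] using vc vx vd
      by (simp add: Gmult[OF grpH] del: cls_GZ cls_GA cls_GH)
    have e2: "cls H I (wc @ wd) = cls H I []"
      using G.r_inv[OF cc, unfolded d0] unfolding c0 using vc vd by (simp add: Gmult[OF grpH] Gone[OF grpH])
    note RP = RP0
    have one: "\<one>\<^bsub>H\<^esub> \<in> carrier H" by simp
    define s0 where "s0 = ({} :: 'h set, \<one>\<^bsub>H\<^esub>, False)"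
    have g0: "good H s0" by (simp add: s0_def good_def)
    have pe1: "pres_eq H I (wc @ wx @ wd) (wx @ [(GZ,False)])"
      using e1 cls_eq_iff[OF grpH, of "wc @ wx @ wd" I] vc vx vd by simp
    have pe2: "pres_eq H I (wc @ wd) []"
      using e2 cls_eq_iff[OF grpH, of "wc @ wd" I] vc vd by simp
    have q1: "run H I lt (wc @ wx @ wd) s0 = run H I lt (wx @ [(GZ,False)]) s0"
      by (rule RP[OF pe1 g0])
    have q2: "run H I lt (wc @ wd) s0 = s0"
      using RP[OF pe2 g0] by simp
    note RF = run_formula[OF grpH]
    define Sc where "Sc = word_supp H wc"
    define Sd where "Sd = word_supp H wd"
    define k0 where "k0 = word_pi H wc"
    define kd where "kd = word_pi H wd"
    have Scc: "Sc \<subseteq> carrier H" "finite Sc"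
      using word_supp_sub[OF grpH] word_supp_finite[OF grpH vc] by (auto simp: Sc_def)
    have Sdc: "Sd \<subseteq> carrier H" "finite Sd"
      using word_supp_sub[OF grpH] word_supp_finite[OF grpH vd] by (auto simp: Sd_def)
    have k0c: "k0 \<in> carrier H" using word_pi_closed[OF grpH vc] by (simp add: k0_def)
    have sd0: "\<And>X. sd {} X = X" by (simp add: sd_def)
    have R1: "run H I lt wc s0 = (Sc, k0, Ew H I lt wc \<one>\<^bsub>H\<^esub>)"
      using RF[OF vc, of "{}" "\<one>\<^bsub>H\<^esub>" I lt False] tr_one[OF grpH Scc(1)] k0c
      by (simp add: s0_def sd0 Sc_def k0_def)
    define Ec where "Ec = Ew H I lt wc \<one>\<^bsub>H\<^esub>"
    define Ed where "Ed = Ew H I lt wd k0"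
    have R2: "run H I lt wd (Sc, k0, Ec) = (sd Sc (tr H k0 Sd), k0 \<otimes>\<^bsub>H\<^esub> kd,
        (Ec \<noteq> beta2 H I lt Sc (tr H k0 Sd)) \<noteq> Ed)"
      using RF[OF vd Scc(2) k0c] by (simp add: Sd_def kd_def Ed_def)
    have "run H I lt wd (Sc, k0, Ec) = s0" using q2 R1 by (simp add: Ec_def)
    then have "sd Sc (tr H k0 Sd) = {}" and E0: "((Ec \<noteq> beta2 H I lt Sc (tr H k0 Sd)) \<noteq> Ed) = False"
      unfolding R2 by (simp_all add: s0_def)
    then have TSd: "tr H k0 Sd = Sc" by (metis sd_empty_eq)
    define T where "T = tr H k0 Sx"
    define Exk where "Exk = Ew H I lt wx k0"
    define Ex1 where "Ex1 = Ew H I lt wx \<one>\<^bsub>H\<^esub>"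
    have fT: "finite T" using Sxc by (simp add: T_def tr_def)
    have R3: "run H I lt wx (Sc, k0, Ec) = (sd Sc T, k0, (Ec \<noteq> beta2 H I lt Sc T) \<noteq> Exk)"
      using RF[OF vx Scc(2) k0c] k0c by (simp add: T_def Sx_def pix Exk_def)
    have R4: "run H I lt wd (sd Sc T, k0, (Ec \<noteq> beta2 H I lt Sc T) \<noteq> Exk) =
       (sd (sd Sc T) Sc, k0 \<otimes>\<^bsub>H\<^esub> kd,
        (((Ec \<noteq> beta2 H I lt Sc T) \<noteq> Exk) \<noteq> beta2 H I lt (sd Sc T) Sc) \<noteq> Ed)"
      using RF[OF vd _ k0c, of "sd Sc T"] Scc fT TSd by (simp add: Sd_def kd_def Ed_def)
    have R5: "run H I lt (wx @ [(GZ,False)]) s0 = (Sx, \<one>\<^bsub>H\<^esub>, \<not> Ex1)"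
      using RF[OF vx, of "{}" "\<one>\<^bsub>H\<^esub>" I lt False] tr_one[OF grpH Sxc(1)]
      by (simp add: s0_def sd0 Sx_def pix Ex1_def)
    have "run H I lt (wc @ wx @ wd) s0 = (sd (sd Sc T) Sc, k0 \<otimes>\<^bsub>H\<^esub> kd,
        (((Ec \<noteq> beta2 H I lt Sc T) \<noteq> Exk) \<noteq> beta2 H I lt (sd Sc T) Sc) \<noteq> Ed)"
      using R1 R3 R4 by (simp add: Ec_def)
    then have L: "sd (sd Sc T) Sc = Sx" and E: "((((Ec \<noteq> beta2 H I lt Sc T) \<noteq> Exk) \<noteq> beta2 H I lt (sd Sc T) Sc) \<noteq> Ed) = (\<not> Ex1)"
      using q1 R5 by simp_all
    have TS: "T = Sx" using L by (auto simp: sd_def)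
    have b: "beta2 H I lt (sd Sc T) Sc = (beta2 H I lt Sc Sc \<noteq> beta2 H I lt T Sc)"
      using beta2_sd1[where H=H and I=I and lt=lt, OF Scc(2) fT Scc(2)] .
    have E0': "((Ec \<noteq> beta2 H I lt Sc Sc) \<noteq> Ed) = False" using E0 TSd by simp
    have key: "((beta2 H I lt Sc Sx \<noteq> beta2 H I lt Sx Sc) \<noteq> Exk) = (\<not> Ex1)"
      using E E0' b unfolding TS by auto
    have Sx_ne: "Sx \<noteq> {}"
    proof
      assume "Sx = {}"
      moreover then have "Exk = Ex1"
        using EI[OF vx k0c] by (simp add: Exk_def Ex1_def Sx_def)
      ultimately show False using key by simp
    qed
    have "k0 = \<one>\<^bsub>H\<^esub>"
      using torsion_fix[OF grpH tf Sxc Sx_ne k0c] TS by (simp add: T_def)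
    then have "Exk = Ex1" by (simp add: Exk_def Ex1_def)
    then have "beta2 H I lt Sc Sx \<noteq> beta2 H I lt Sx Sc" using key by auto
    then have "odd (card {(g,p). g \<in> Sc \<and> p \<in> Sx \<and> inv\<^bsub>H\<^esub> g \<otimes>\<^bsub>H\<^esub> p \<in> I})"
      using PP[OF Scc Sxc] by simp
    moreover have "{(g,p). g \<in> Sc \<and> p \<in> Sx \<and> inv\<^bsub>H\<^esub> g \<otimes>\<^bsub>H\<^esub> p \<in> I}
                  = Sigma Sc (\<lambda>g. {p \<in> Sx. inv\<^bsub>H\<^esub> g \<otimes>\<^bsub>H\<^esub> p \<in> I})" by auto
    ultimately obtain g where gS: "g \<in> Sc" and go: "odd (card {p \<in> Sx. inv\<^bsub>H\<^esub> g \<otimes>\<^bsub>H\<^esub> p \<in> I})"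
      using odd_sigma[OF Scc(2)] Sxc(2) by (metis (no_types, lifting) finite_subset mem_Collect_eq subsetI)
    have gc: "g \<in> carrier H" using gS Scc by auto
    show "\<exists>g \<in> carrier H. odd (card ((\<lambda>s. inv\<^bsub>H\<^esub> g \<otimes>\<^bsub>H\<^esub> s) ` supp H x \<inter> I))"
    proof (intro bexI[of _ g])
      show "g \<in> carrier H" by (rule gc)
      show "odd (card ((\<lambda>s. inv\<^bsub>H\<^esub> g \<otimes>\<^bsub>H\<^esub> s) ` supp H x \<inter> I))"
        unfolding Sxe card_tr_I[OF grpH gc Sxc(1)] by (rule go)
    qed
  next
    assume "\<exists>g \<in> carrier H. odd (card ((\<lambda>s. inv\<^bsub>H\<^esub> g \<otimes>\<^bsub>H\<^esub> s) ` supp H x \<inter> I))"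
    then obtain g where gc: "g \<in> carrier H"
      and go: "odd (card ((\<lambda>s. inv\<^bsub>H\<^esub> g \<otimes>\<^bsub>H\<^esub> s) ` supp H x \<inter> I))" by blast
    have iv: "p \<in> carrier H \<Longrightarrow> inv\<^bsub>H\<^esub> p \<otimes>\<^bsub>H\<^esub> g \<in> I \<longleftrightarrow> inv\<^bsub>H\<^esub> g \<otimes>\<^bsub>H\<^esub> p \<in> I" for p
    proof -
      assume c: "p \<in> carrier H"
      have "inv\<^bsub>H\<^esub> (inv\<^bsub>H\<^esub> p \<otimes>\<^bsub>H\<^esub> g) = inv\<^bsub>H\<^esub> g \<otimes>\<^bsub>H\<^esub> p"
        "inv\<^bsub>H\<^esub> (inv\<^bsub>H\<^esub> g \<otimes>\<^bsub>H\<^esub> p) = inv\<^bsub>H\<^esub> p \<otimes>\<^bsub>H\<^esub> g"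
        using c gc by (simp_all add: Hg.inv_mult_group)
      then show ?thesis using I_inv by metis
    qed
    have cnt: "cntw (\<lambda>p. inv\<^bsub>H\<^esub> p \<otimes>\<^bsub>H\<^esub> g \<in> I) wx = True"
    proof -
      have "{p \<in> Sx. inv\<^bsub>H\<^esub> p \<otimes>\<^bsub>H\<^esub> g \<in> I} = {p \<in> Sx. inv\<^bsub>H\<^esub> g \<otimes>\<^bsub>H\<^esub> p \<in> I}"
        using iv Sxc(1) by auto
      then show ?thesis using cntw_supp[OF vx] go card_tr_I[OF grpH gc Sxc(1), of I]
        by (simp add: Sxe Sx_def)
    qed
    have cw: "Cg g \<otimes>\<^bsub>Gpres H I\<^esub> x = x \<otimes>\<^bsub>Gpres H I\<^esub> Cg g \<otimes>\<^bsub>Gpres H I\<^esub> Zz"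
      using Cg_word[OF vx gc] unfolding cnt xeq pix by (simp add: gc Zb_def)
    have cgc: "Cg g \<in> carrier (Gpres H I)" using gc by simp
    have "Cg g \<otimes>\<^bsub>Gpres H I\<^esub> x \<otimes>\<^bsub>Gpres H I\<^esub> inv\<^bsub>Gpres H I\<^esub> (Cg g)
        = x \<otimes>\<^bsub>Gpres H I\<^esub> (Cg g \<otimes>\<^bsub>Gpres H I\<^esub> (Zz \<otimes>\<^bsub>Gpres H I\<^esub> inv\<^bsub>Gpres H I\<^esub> (Cg g)))"
      unfolding cw using xc cgc by (simp add: G.m_assoc)
    also have "\<dots> = x \<otimes>\<^bsub>Gpres H I\<^esub> (Cg g \<otimes>\<^bsub>Gpres H I\<^esub> (inv\<^bsub>Gpres H I\<^esub> (Cg g) \<otimes>\<^bsub>Gpres H I\<^esub> Zz))"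
      using Z_central[of "inv\<^bsub>Gpres H I\<^esub> (Cg g)"] cgc by simp
    also have "\<dots> = x \<otimes>\<^bsub>Gpres H I\<^esub> zG H I"
      using xc cgc by (simp add: G.m_assoc[symmetric] zG)
    finally show "\<exists>c \<in> carrier (Gpres H I). c \<otimes>\<^bsub>Gpres H I\<^esub> x \<otimes>\<^bsub>Gpres H I\<^esub> inv\<^bsub>Gpres H I\<^esub> c
              = x \<otimes>\<^bsub>Gpres H I\<^esub> zG H I" using cgc by blast
  qed
qed


end
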